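(* Let $T>0$, $L>0$, $\alpha\in\mathbb{R}\setminus\{0\}$ and let $n\ge 2$ be an integer. Let $x_0>L$, $0<t_0<T$, $\beta>0$, and set $\psi(t,x)=(x-x_0)^2-\beta(t-t_0)^2$. Then there exist a constant $C>0$ and, for each $m\in\{0,\dots,n-1\}$, functions $R_m(t,x;\lambda)$ satisfying $|R_m(t,x;\lambda)|\le C\lambda^{2n-2m-3}$ for all $(t,x)\in[0,T]\times[0,L]$ and all $\lambda\ge 1$, such that for every $\lambda\ge1$ and every $v\in C_0^\infty((0,T)\times(0,L);\mathbb{R})$, with $w=e^{\lambda\psi}v$, $$\sum_{m=0}^{n-1}\int_0^T\!\!\int_0^L\Big[n^2\binom{n-1}{m}\lambda^{2n-2m-1}\psi_x^{2n-2m-2}\psi_{xx}+R_m(t,x;\lambda)\Big]|\partial_x^m w|^2\,dx\,dt\le \int_0^T\!\!\int_0^L e^{2\lambda\psi}\big|\alpha\partial_t v+\partial_x^n v\big|^2\,dx\,dt.$$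
   Context: $\binom{j}{k}$ denotes the binomial coefficient (taken to be $0$ unless $0\le k\le j$). $\psi_x,\psi_{xx}$ denote partial derivatives of $\psi$ in $x$; here $\psi_x=2(x-x_0)$, $\psi_{xx}=2$. *)

theory Defs
  imports "HOL-Analysis.Analysis"
begin

definition pt :: "(real \<Rightarrow> real \<Rightarrow> real) \<Rightarrow> real \<Rightarrow> real \<Rightarrow> real" where
  "pt f = (\<lambda>t x. deriv (\<lambda>s. f s x) t)"

definition px :: "(real \<Rightarrow> real \<Rightarrow> real) \<Rightarrow> real \<Rightarrow> real \<Rightarrow> real" where
  "px f = (\<lambda>t x. deriv (\<lambda>y. f t y) x)"

definition apply_partials :: "bool list \<Rightarrow> (real \<Rightarrow> real \<Rightarrow> real) \<Rightarrow> real \<Rightarrow> real \<Rightarrow> real" where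
  "apply_partials ds f = fold (\<lambda>b g. if b then pt g else px g) ds f"

text \<open>C-infinity on R^2: every iterated partial derivative is (Frechet) differentiable everywhere.\<close>
definition smooth2 :: "(real \<Rightarrow> real \<Rightarrow> real) \<Rightarrow> bool" where
  "smooth2 f \<longleftrightarrow> (\<forall>ds z. (\<lambda>p. apply_partials ds f (fst p) (snd p)) differentiable (at z))"

text \<open>C_0^infinity((0,T) x (0,L)), functions extended by zero to all of R^2.\<close>
definition test_fun :: "real \<Rightarrow> real \<Rightarrow> (real \<Rightarrow> real \<Rightarrow> real) \<Rightarrow> bool" where
  "test_fun T L v \<longleftrightarrow> smooth2 v \<and>
     (\<exists>a b c d. 0 < a \<and> b < T \<and> 0 < c \<and> d < L \<and>
        (\<forall>t x. v t x \<noteq> 0 \<longrightarrow> a \<le> t \<and> t \<le> b \<and> c \<le> x \<and> x \<le> d))"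

end

theory Submission
  imports Defs "HOL-Computational_Algebra.Polynomial"
begin
definition C1 :: "(real \<Rightarrow> real) \<Rightarrow> bool" where
  "C1 g \<longleftrightarrow> (\<forall>k x. (deriv ^^ k) g field_differentiable (at x))"

lemma C1_fd: "C1 g \<Longrightarrow> (deriv ^^ k) g field_differentiable (at x)"
  by (simp add: C1_def)

lemma funpow_deriv_Suc': "(deriv ^^ Suc k) g = (deriv ^^ k) (deriv g)"
  by (simp add: funpow_Suc_right del: funpow.simps)

lemma C1_deriv: "C1 g \<Longrightarrow> C1 (deriv g)"
  unfolding C1_def by (metis funpow_deriv_Suc')

lemma C1_funpow: "C1 g \<Longrightarrow> C1 ((deriv ^^ k) g)"
  by (induction k) (auto intro: C1_deriv)

lemma C1_cont: "C1 g \<Longrightarrow> continuous_on S ((deriv ^^ k) g)"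
  by (meson C1_fd continuous_at_imp_continuous_on field_differentiable_imp_continuous_at)

lemma C1_cont0: "C1 g \<Longrightarrow> continuous_on S g"
  using C1_cont[of g S 0] by simp

lemma C1_DERIV: "C1 g \<Longrightarrow> ((deriv ^^ k) g has_field_derivative (deriv ^^ Suc k) g x) (at x)"
  using C1_fd[of g k x] DERIV_deriv_iff_field_differentiable by fastforce

lemma C1_DERIV0: "C1 g \<Longrightarrow> (g has_field_derivative deriv g x) (at x)"
  using C1_DERIV[of g 0 x] by simp

lemma fd_DERIV: "f field_differentiable (at x) \<Longrightarrow> (f has_field_derivative deriv f x) (at x)"
  using DERIV_deriv_iff_field_differentiable by blast

lemma deriv_lin:
  assumes "f field_differentiable (at x)" "g field_differentiable (at x)"
  shows "deriv (\<lambda>y. a * f y + b * g y) x = a * deriv f x + b * deriv g x"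
  by (rule DERIV_imp_deriv) (auto intro!: derivative_eq_intros fd_DERIV assms)

lemma fd_lin:
  assumes "f field_differentiable (at x)" "g field_differentiable (at x)"
  shows "(\<lambda>y. a * f y + b * g y) field_differentiable (at x)"
  unfolding field_differentiable_def
  by (rule exI) (auto intro!: derivative_eq_intros fd_DERIV assms)

lemma funpow_deriv_lin:
  assumes "C1 f" "C1 g"
  shows "(deriv ^^ k) (\<lambda>y. a * f y + b * g y) = (\<lambda>y. a * (deriv ^^ k) f y + b * (deriv ^^ k) g y)"
proof (induction k)
  case 0 then show ?case by simp
next
  case (Suc k)
  have "(deriv ^^ Suc k) (\<lambda>y. a * f y + b * g y) = deriv (\<lambda>y. a * (deriv ^^ k) f y + b * (deriv ^^ k) g y)"
    using Suc by simp
  then show ?case by (simp add: fun_eq_iff deriv_lin C1_fd assms)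
qed

lemma C1_lin: "C1 f \<Longrightarrow> C1 g \<Longrightarrow> C1 (\<lambda>y. a * f y + b * g y)"
  unfolding C1_def[of "\<lambda>y. a * f y + b * g y"]
  by (simp add: funpow_deriv_lin fd_lin C1_fd)

lemma funpow_deriv_linmult:
  assumes "C1 f"
  shows "(deriv ^^ k) (\<lambda>y. (a * y + b) * f y) =
     (\<lambda>y. (a * y + b) * (deriv ^^ k) f y + real k * a * (deriv ^^ (k - 1)) f y)"
proof (induction k)
  case 0 then show ?case by simp
next
  case (Suc k)
  have e: "k \<noteq> 0 \<Longrightarrow> deriv ((deriv ^^ (k - 1)) f) y = (deriv ^^ k) f y" for y
    by (cases k) auto
  have "(deriv ^^ Suc k) (\<lambda>y. (a * y + b) * f y) =
        deriv (\<lambda>y. (a * y + b) * (deriv ^^ k) f y + real k * a * (deriv ^^ (k - 1)) f y)"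
    by (simp add: Suc)
  also have "\<dots> = (\<lambda>y. (a * y + b) * (deriv ^^ Suc k) f y + real (Suc k) * a * (deriv ^^ (Suc k - 1)) f y)"
  proof
    fix y
    have D: "((\<lambda>y. (a * y + b) * (deriv ^^ k) f y + real k * a * (deriv ^^ (k - 1)) f y) has_field_derivative
        (a * (deriv ^^ k) f y + (a * y + b) * (deriv ^^ Suc k) f y + real k * a * deriv ((deriv ^^ (k - 1)) f) y)) (at y)"
      by (auto intro!: derivative_eq_intros C1_DERIV[OF assms] fd_DERIV C1_fd[OF assms])
    have "deriv (\<lambda>y. (a * y + b) * (deriv ^^ k) f y + real k * a * (deriv ^^ (k - 1)) f y) y =
      a * (deriv ^^ k) f y + (a * y + b) * (deriv ^^ Suc k) f y + real k * a * deriv ((deriv ^^ (k - 1)) f) y"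
      by (rule DERIV_imp_deriv[OF D])
    also have "\<dots> = (a * y + b) * (deriv ^^ Suc k) f y + real (Suc k) * a * (deriv ^^ (Suc k - 1)) f y"
      using e[of y] by (cases "k = 0") (auto simp: algebra_simps)
    finally show "deriv (\<lambda>y. (a * y + b) * (deriv ^^ k) f y + real k * a * (deriv ^^ (k - 1)) f y) y =
       (a * y + b) * (deriv ^^ Suc k) f y + real (Suc k) * a * (deriv ^^ (Suc k - 1)) f y" .
  qed
  finally show ?case .
qed

lemma C1_linmult: assumes "C1 f" shows "C1 (\<lambda>y. (a * y + b) * f y)"
  unfolding C1_def funpow_deriv_linmult[OF assms]
proof (intro allI)
  fix k x
  have "((\<lambda>y. (a * y + b) * (deriv ^^ k) f y) has_field_derivative
      (a * (deriv ^^ k) f x + (a * x + b) * (deriv ^^ Suc k) f x)) (at x)"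
    by (auto intro!: derivative_eq_intros C1_DERIV[OF assms])
  then have "(\<lambda>y. (a * y + b) * (deriv ^^ k) f y) field_differentiable at x"
    unfolding field_differentiable_def by blast
  from fd_lin[OF this C1_fd[OF assms, of "k - 1" x], of 1 "real k * a"]
  show "(\<lambda>y. (a * y + b) * (deriv ^^ k) f y + real k * a * (deriv ^^ (k - 1)) f y) field_differentiable at x"
    by simp
qed

definition Z :: "real \<Rightarrow> real \<Rightarrow> (real \<Rightarrow> real) \<Rightarrow> bool" where
  "Z c d g \<longleftrightarrow> (\<forall>x. x < c \<or> d < x \<longrightarrow> g x = 0)"

lemma Z_deriv: assumes "Z c d g" shows "Z c d (deriv g)"
  unfolding Z_def
proof (intro allI impI)
  fix x assume x: "x < c \<or> d < x"
  have z: "((\<lambda>_. 0::real) has_field_derivative 0) (at x)" by simp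
  have "(g has_field_derivative 0) (at x)"
  proof (cases "x < c")
    case True
    have "\<And>y. y \<in> {..<c} \<Longrightarrow> 0 = g y" using assms by (simp add: Z_def)
    show ?thesis
      by (rule has_field_derivative_transform_within_open[of "\<lambda>_. 0" 0 x "{..<c}" g, OF z])
        (use True \<open>\<And>y. y \<in> {..<c} \<Longrightarrow> 0 = g y\<close> in auto)
  next
    case False
    then have "d < x" using x by auto
    have "\<And>y. y \<in> {d<..} \<Longrightarrow> 0 = g y" using assms by (simp add: Z_def)
    show ?thesis
      by (rule has_field_derivative_transform_within_open[of "\<lambda>_. 0" 0 x "{d<..}" g, OF z])
        (use \<open>d < x\<close> \<open>\<And>y. y \<in> {d<..} \<Longrightarrow> 0 = g y\<close> in auto)
  qed
  then show "deriv g x = 0" by (rule DERIV_imp_deriv)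
qed

lemma Z_funpow: "Z c d g \<Longrightarrow> Z c d ((deriv ^^ k) g)"
proof (induction k)
  case (Suc k) then show ?case using Z_deriv[of c d "(deriv ^^ k) g"] by simp
qed simp

lemma Z_lin: "Z c d f \<Longrightarrow> Z c d g \<Longrightarrow> Z c d (\<lambda>y. a * f y + b * g y)"
  by (simp add: Z_def)

lemma Z_mult: "Z c d f \<Longrightarrow> Z c d (\<lambda>y. h y * f y)"
  by (simp add: Z_def)

definition nice :: "real \<Rightarrow> real \<Rightarrow> (real \<Rightarrow> real) \<Rightarrow> bool" where
  "nice c d g \<longleftrightarrow> C1 g \<and> Z c d g"

definition Bo :: "real \<Rightarrow> real \<Rightarrow> (real \<Rightarrow> real) \<Rightarrow> real \<Rightarrow> real" where
  "Bo lam x0 f = (\<lambda>x. deriv f x - lam * (2 * (x - x0)) * f x)"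

definition Bso :: "real \<Rightarrow> real \<Rightarrow> (real \<Rightarrow> real) \<Rightarrow> real \<Rightarrow> real" where
  "Bso lam x0 f = (\<lambda>x. - deriv f x - lam * (2 * (x - x0)) * f x)"

lemma Bo_alt: "Bo lam x0 f = (\<lambda>y. 1 * deriv f y + (-1) * (((2*lam) * y + (-2*lam*x0)) * f y))"
  by (auto simp: Bo_def algebra_simps)

lemma Bso_alt: "Bso lam x0 f = (\<lambda>y. (-1) * deriv f y + (-1) * (((2*lam) * y + (-2*lam*x0)) * f y))"
  by (auto simp: Bso_def algebra_simps)

lemma C1_Bo: "C1 f \<Longrightarrow> C1 (Bo lam x0 f)"
  unfolding Bo_alt by (intro C1_lin C1_deriv C1_linmult)

lemma C1_Bso: "C1 f \<Longrightarrow> C1 (Bso lam x0 f)"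
  unfolding Bso_alt by (intro C1_lin C1_deriv C1_linmult)

lemma Z_Bo: "Z c d f \<Longrightarrow> Z c d (Bo lam x0 f)"
  unfolding Bo_alt by (intro Z_lin Z_deriv Z_mult)

lemma Z_Bso: "Z c d f \<Longrightarrow> Z c d (Bso lam x0 f)"
  unfolding Bso_alt by (intro Z_lin Z_deriv Z_mult)

lemma nice_Bo: "nice c d f \<Longrightarrow> nice c d (Bo lam x0 f)"
  by (simp add: nice_def C1_Bo Z_Bo)

lemma nice_Bso: "nice c d f \<Longrightarrow> nice c d (Bso lam x0 f)"
  by (simp add: nice_def C1_Bso Z_Bso)

lemma nice_Bo_pow: "nice c d f \<Longrightarrow> nice c d ((Bo lam x0 ^^ k) f)"
  by (induction k) (auto intro: nice_Bo)

lemma nice_Bso_pow: "nice c d f \<Longrightarrow> nice c d ((Bso lam x0 ^^ k) f)"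
  by (induction k) (auto intro: nice_Bso)

lemma C1_DERIV1: "C1 g \<Longrightarrow> (deriv g has_field_derivative deriv (deriv g) x) (at x)"
  using C1_DERIV[of g 1 x] by simp

lemma C1_cont_intros [continuous_intros]:
  "C1 f \<Longrightarrow> continuous_on S (\<lambda>x. (deriv ^^ k) f x)"
  "C1 f \<Longrightarrow> continuous_on S (\<lambda>x. deriv f x)"
  using C1_cont[of f S k] C1_cont[of f S 1] by simp_all

definition ip :: "real \<Rightarrow> (real \<Rightarrow> real) \<Rightarrow> (real \<Rightarrow> real) \<Rightarrow> real" where
  "ip L f g = integral {0..L} (\<lambda>x. f x * g x)"

definition nq :: "real \<Rightarrow> (real \<Rightarrow> real) \<Rightarrow> real" where
  "nq L f = ip L f f"

lemma ip_sym: "ip L f g = ip L g f"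
  by (simp add: ip_def mult.commute)

lemma integral_lin2:
  fixes f g :: "real \<Rightarrow> real"
  assumes "continuous_on {0..L} f" "continuous_on {0..L} g"
  shows "integral {0..L} (\<lambda>x. a * f x + b * g x) = a * integral {0..L} f + b * integral {0..L} g"
proof -
  have i1: "f integrable_on {0..L}" by (rule integrable_continuous_interval[OF assms(1)])
  have i2: "g integrable_on {0..L}" by (rule integrable_continuous_interval[OF assms(2)])
  have "((\<lambda>x. a * f x + b * g x) has_integral (a * integral {0..L} f + b * integral {0..L} g)) {0..L}"
    by (intro has_integral_add has_integral_mult_right) (use i1 i2 in \<open>simp_all add: has_integral_integral\<close>)
  then show ?thesis by (rule integral_unique)
qed

lemma ip_lin2:
  assumes "continuous_on {0..L} f" "continuous_on {0..L} g" "continuous_on {0..L} h"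
  shows "ip L h (\<lambda>x. f x + a * g x) = ip L h f + a * ip L h g"
proof -
  have "ip L h (\<lambda>x. f x + a * g x) = integral {0..L} (\<lambda>x. 1 * (h x * f x) + a * (h x * g x))"
    unfolding ip_def by (simp add: algebra_simps)
  also have "\<dots> = ip L h f + a * ip L h g"
    unfolding ip_def by (subst integral_lin2) (auto intro!: continuous_intros assms)
  finally show ?thesis .
qed

lemma nq_nonneg: "continuous_on {0..L} f \<Longrightarrow> 0 \<le> nq L f"
  unfolding nq_def ip_def
  by (rule integral_nonneg) (auto intro!: integrable_continuous_interval continuous_intros)

lemma nq_expand:
  assumes "continuous_on {0..L} f" "continuous_on {0..L} g"
  shows "nq L (\<lambda>x. f x + a * g x) = nq L f + 2 * a * ip L f g + a^2 * nq L g"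
proof -
  have c: "continuous_on {0..L} (\<lambda>x. f x + a * g x)" by (auto intro!: continuous_intros assms)
  have "nq L (\<lambda>x. f x + a * g x) = ip L (\<lambda>x. f x + a * g x) f + a * ip L (\<lambda>x. f x + a * g x) g"
    unfolding nq_def by (rule ip_lin2[OF assms c])
  also have "ip L (\<lambda>x. f x + a * g x) f = ip L f f + a * ip L f g"
    by (subst ip_sym) (rule ip_lin2[OF assms assms(1)])
  also have "ip L (\<lambda>x. f x + a * g x) g = ip L g f + a * ip L g g"
    by (subst ip_sym) (rule ip_lin2[OF assms assms(2)])
  finally show ?thesis by (simp add: nq_def ip_sym[of L g f] power2_eq_square algebra_simps)
qed

lemma ibp:
  assumes "0 \<le> L" "0 < c" "d < L" "C1 f" "C1 g" "Z c d f"
  shows "integral {0..L} (\<lambda>x. deriv f x * g x) = - integral {0..L} (\<lambda>x. f x * deriv g x)"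
proof -
  have f0: "f 0 = 0" "f L = 0" using assms(2,3,6) by (auto simp: Z_def)
  have "((\<lambda>x. deriv f x * g x + f x * deriv g x) has_integral (f L * g L - f 0 * g 0)) {0..L}"
  proof (rule fundamental_theorem_of_calculus[OF assms(1)])
    fix x assume "x \<in> {0..L}"
    have "((\<lambda>x. f x * g x) has_field_derivative (deriv f x * g x + f x * deriv g x)) (at x)"
      by (auto intro!: derivative_eq_intros C1_DERIV0 assms)
    then show "((\<lambda>x. f x * g x) has_vector_derivative (deriv f x * g x + f x * deriv g x)) (at x within {0..L})"
      by (simp add: has_real_derivative_iff_has_vector_derivative[symmetric] has_field_derivative_at_within)
  qed
  then have "integral {0..L} (\<lambda>x. 1 * (deriv f x * g x) + 1 * (f x * deriv g x)) = 0"
    using f0 by (simp add: integral_unique)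
  then show ?thesis
    by (subst (asm) integral_lin2) (auto intro!: continuous_intros assms C1_cont0[OF assms(4)] C1_cont0[OF assms(5)])
qed

lemma adj:
  assumes "0 \<le> L" "0 < c" "d < L" "nice c d f" "nice c d g"
  shows "ip L (Bo lam x0 f) g = ip L f (Bso lam x0 g)"
proof -
  have C: "C1 f" "C1 g" "Z c d f" using assms by (auto simp: nice_def)
  have "ip L (Bo lam x0 f) g = integral {0..L} (\<lambda>x. 1 * (deriv f x * g x) + (- lam) * (2 * (x - x0) * f x * g x))"
    unfolding ip_def Bo_def by (simp add: algebra_simps)
  also have "\<dots> = integral {0..L} (\<lambda>x. deriv f x * g x) - lam * integral {0..L} (\<lambda>x. 2 * (x - x0) * f x * g x)"
    by (subst integral_lin2) (auto intro!: continuous_intros C C1_cont0[OF C(1)] C1_cont0[OF C(2)])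
  also have "\<dots> = - integral {0..L} (\<lambda>x. f x * deriv g x) - lam * integral {0..L} (\<lambda>x. 2 * (x - x0) * f x * g x)"
    using ibp[OF assms(1-3) C] by simp
  also have "\<dots> = integral {0..L} (\<lambda>x. (-1) * (f x * deriv g x) + (- lam) * (2 * (x - x0) * f x * g x))"
    by (subst integral_lin2) (auto intro!: continuous_intros C C1_cont0[OF C(1)] C1_cont0[OF C(2)])
  also have "\<dots> = ip L f (Bso lam x0 g)"
    unfolding ip_def Bso_def by (simp add: algebra_simps)
  finally show ?thesis .
qed

lemma adj_pow:
  assumes "0 \<le> L" "0 < c" "d < L" "nice c d f" "nice c d g"
  shows "ip L ((Bo lam x0 ^^ k) f) g = ip L f ((Bso lam x0 ^^ k) g)"
  using assms(4,5)
proof (induction k arbitrary: f)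
  case 0 then show ?case by simp
next
  case (Suc k)
  have "ip L ((Bo lam x0 ^^ Suc k) f) g = ip L ((Bo lam x0 ^^ k) (Bo lam x0 f)) g"
    by (simp add: funpow_Suc_right del: funpow.simps)
  also have "\<dots> = ip L (Bo lam x0 f) ((Bso lam x0 ^^ k) g)"
    using Suc nice_Bo by blast
  also have "\<dots> = ip L f (Bso lam x0 ((Bso lam x0 ^^ k) g))"
    by (rule adj[OF assms(1-3) Suc(2) nice_Bso_pow[OF Suc(3)]])
  finally show ?case by simp
qed

lemma deriv_Bo:
  assumes "C1 g"
  shows "deriv (Bo lam x0 g) x = deriv (deriv g) x - lam * (2 * g x + 2 * (x - x0) * deriv g x)"
  unfolding Bo_def
  by (rule DERIV_imp_deriv) (auto intro!: derivative_eq_intros C1_DERIV0 C1_DERIV1 assms simp: algebra_simps)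

lemma deriv_Bso:
  assumes "C1 g"
  shows "deriv (Bso lam x0 g) x = - deriv (deriv g) x - lam * (2 * g x + 2 * (x - x0) * deriv g x)"
  unfolding Bso_def
  by (rule DERIV_imp_deriv) (auto intro!: derivative_eq_intros C1_DERIV0 C1_DERIV1 assms simp: algebra_simps)

lemma Bs_B: assumes "C1 g" shows "Bso lam x0 (Bo lam x0 g) = (\<lambda>x. Bo lam x0 (Bso lam x0 g) x + 4 * lam * g x)"
proof
  fix x
  have e1: "Bso lam x0 (Bo lam x0 g) x = - deriv (Bo lam x0 g) x - lam * (2 * (x - x0)) * Bo lam x0 g x"
    by (simp add: Bso_def)
  have e2: "Bo lam x0 (Bso lam x0 g) x = deriv (Bso lam x0 g) x - lam * (2 * (x - x0)) * Bso lam x0 g x"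
    by (simp add: Bo_def)
  show "Bso lam x0 (Bo lam x0 g) x = Bo lam x0 (Bso lam x0 g) x + 4 * lam * g x"
    unfolding e1 e2 deriv_Bo[OF assms] deriv_Bso[OF assms]
    by (simp add: Bo_def Bso_def algebra_simps)
qed

lemma Bso_lin:
  assumes "C1 F" "C1 G"
  shows "Bso lam x0 (\<lambda>x. F x + a * G x) = (\<lambda>x. Bso lam x0 F x + a * Bso lam x0 G x)"
proof
  fix x
  have "deriv (\<lambda>x. 1 * F x + a * G x) x = 1 * deriv F x + a * deriv G x"
    by (rule deriv_lin) (use C1_fd[OF assms(1), of 0] C1_fd[OF assms(2), of 0] in auto)
  then show "Bso lam x0 (\<lambda>x. F x + a * G x) x = Bso lam x0 F x + a * Bso lam x0 G x"
    by (simp add: Bso_def algebra_simps)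
qed

lemma C1_Bso_pow: "C1 f \<Longrightarrow> C1 ((Bso lam x0 ^^ k) f)"
  by (induction k) (auto intro: C1_Bso)

lemma C1_Bo_pow: "C1 f \<Longrightarrow> C1 ((Bo lam x0 ^^ k) f)"
  by (induction k) (auto intro: C1_Bo)

lemma comm:
  assumes "C1 g"
  shows "(Bso lam x0 ^^ Suc k) (Bo lam x0 g) =
    (\<lambda>x. Bo lam x0 ((Bso lam x0 ^^ Suc k) g) x + real (Suc k) * (4 * lam) * (Bso lam x0 ^^ k) g x)"
proof (induction k)
  case 0 then show ?case using Bs_B[OF assms] by (simp add: algebra_simps)
next
  case (Suc k)
  define H where "H = (Bso lam x0 ^^ Suc k) g"
  have CH: "C1 H" unfolding H_def by (rule C1_Bso_pow[OF assms])
  have "(Bso lam x0 ^^ Suc (Suc k)) (Bo lam x0 g) = Bso lam x0 ((Bso lam x0 ^^ Suc k) (Bo lam x0 g))"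
    by simp
  also have "\<dots> = Bso lam x0 (\<lambda>x. Bo lam x0 H x + (real (Suc k) * (4 * lam)) * (Bso lam x0 ^^ k) g x)"
    using Suc by (simp add: H_def)
  also have "\<dots> = (\<lambda>x. Bso lam x0 (Bo lam x0 H) x + (real (Suc k) * (4 * lam)) * Bso lam x0 ((Bso lam x0 ^^ k) g) x)"
    by (rule Bso_lin) (auto intro: C1_Bo CH C1_Bso_pow assms)
  also have "\<dots> = (\<lambda>x. Bo lam x0 (Bso lam x0 H) x + 4 * lam * H x + (real (Suc k) * (4 * lam)) * H x)"
  proof -
    have HH: "Bso lam x0 ((Bso lam x0 ^^ k) g) = H" by (simp add: H_def)
    show ?thesis by (simp only: Bs_B[OF CH] HH)
  qed
  also have "\<dots> = (\<lambda>x. Bo lam x0 ((Bso lam x0 ^^ Suc (Suc k)) g) x + real (Suc (Suc k)) * (4 * lam) * (Bso lam x0 ^^ Suc k) g x)"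
    by (simp add: H_def algebra_simps)
  finally show ?case .
qed

lemma nice_C1: "nice c d f \<Longrightarrow> C1 f" by (simp add: nice_def)

lemma K0:
  assumes "0 \<le> L" "0 < c" "d < L" "nice c d h"
  shows "nq L (Bo lam x0 h) = nq L (Bso lam x0 h) + 4 * lam * nq L h"
proof -
  have C: "C1 h" using assms(4) by (simp add: nice_def)
  have "nq L (Bo lam x0 h) = ip L h (Bso lam x0 (Bo lam x0 h))"
    unfolding nq_def by (rule adj[OF assms(1-4) nice_Bo[OF assms(4)]])
  also have "\<dots> = ip L h (\<lambda>x. Bo lam x0 (Bso lam x0 h) x + (4 * lam) * h x)"
    by (simp add: Bs_B[OF C])
  also have "\<dots> = ip L h (Bo lam x0 (Bso lam x0 h)) + 4 * lam * nq L h"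
    unfolding nq_def by (rule ip_lin2) (auto intro!: C1_cont0[OF C1_Bo[OF C1_Bso[OF C]]] C1_cont0[OF C])
  also have "ip L h (Bo lam x0 (Bso lam x0 h)) = ip L (Bso lam x0 h) (Bso lam x0 h)"
    by (subst ip_sym) (rule adj[OF assms(1-3) nice_Bso[OF assms(4)] assms(4)])
  finally show ?thesis by (simp add: nq_def)
qed

lemma K1:
  assumes "0 \<le> L" "0 < c" "d < L" "nice c d g" "0 \<le> lam"
  shows "nq L ((Bso lam x0 ^^ k) (Bo lam x0 g)) \<ge>
     nq L ((Bso lam x0 ^^ Suc k) g) + (2 * real k + 1) * (4 * lam) * nq L ((Bso lam x0 ^^ k) g)"
proof (cases k)
  case 0 then show ?thesis using K0[OF assms(1-4)] by simp
next
  case (Suc j)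
  have C: "C1 g" using assms(4) by (simp add: nice_def)
  define G where "G = (Bso lam x0 ^^ Suc j) g"
  define H where "H = (Bso lam x0 ^^ j) g"
  have GH: "G = Bso lam x0 H" by (simp add: G_def H_def)
  have nG: "nice c d G" "nice c d H"
    unfolding G_def H_def by (rule nice_Bso_pow[OF assms(4)])+
  have CG: "C1 G" "C1 H" using nG by (auto simp: nice_def)
  have "nq L ((Bso lam x0 ^^ k) (Bo lam x0 g)) = nq L (\<lambda>x. Bo lam x0 G x + (real (Suc j) * (4 * lam)) * H x)"
    using comm[OF C, of j lam x0] Suc by (simp add: G_def H_def)
  also have "\<dots> = nq L (Bo lam x0 G) + 2 * (real (Suc j) * (4 * lam)) * ip L (Bo lam x0 G) H
      + (real (Suc j) * (4 * lam))^2 * nq L H"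
    by (rule nq_expand) (auto intro!: C1_cont0[OF C1_Bo[OF CG(1)]] C1_cont0[OF CG(2)])
  also have "ip L (Bo lam x0 G) H = nq L G"
    unfolding nq_def by (simp add: adj[OF assms(1-3) nG] GH[symmetric])
  also have "nq L (Bo lam x0 G) = nq L (Bso lam x0 G) + 4 * lam * nq L G"
    by (rule K0[OF assms(1-3) nG(1)])
  finally have eq: "nq L ((Bso lam x0 ^^ k) (Bo lam x0 g)) = nq L (Bso lam x0 G) + 4 * lam * nq L G +
      2 * (real (Suc j) * (4 * lam)) * nq L G + (real (Suc j) * (4 * lam))^2 * nq L H" .
  have "0 \<le> nq L H" by (rule nq_nonneg) (auto intro!: C1_cont0[OF CG(2)])
  then have "0 \<le> (real (Suc j) * (4 * lam))^2 * nq L H" by simp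
  moreover have "Bso lam x0 G = (Bso lam x0 ^^ Suc k) g" by (simp add: G_def Suc)
  moreover have "G = (Bso lam x0 ^^ k) g" by (simp add: G_def Suc)
  ultimately show ?thesis using eq Suc by (simp add: algebra_simps)
qed

lemma K2:
  assumes "0 \<le> L" "0 < c" "d < L" "nice c d f" "0 \<le> lam"
  shows "nq L ((Bo lam x0 ^^ Suc m) f) \<ge>
     nq L ((Bso lam x0 ^^ Suc m) f) + (real (Suc m))^2 * (4 * lam) * nq L ((Bso lam x0 ^^ m) f)"
  using assms(4)
proof (induction m arbitrary: f)
  case 0 then show ?case using K0[OF assms(1-3) 0] by simp
next
  case (Suc m)
  have nB: "nice c d (Bo lam x0 f)" by (rule nice_Bo[OF Suc(2)])
  have C: "continuous_on {0..L} ((Bso lam x0 ^^ k) f)" for k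
    using nice_Bso_pow[OF Suc(2), of k lam x0] by (auto simp: nice_def intro: C1_cont0)
  have "nq L ((Bo lam x0 ^^ Suc (Suc m)) f) = nq L ((Bo lam x0 ^^ Suc m) (Bo lam x0 f))"
    by (simp only: funpow_Suc_right o_apply)
  also have "\<dots> \<ge> nq L ((Bso lam x0 ^^ Suc m) (Bo lam x0 f)) +
      (real (Suc m))^2 * (4 * lam) * nq L ((Bso lam x0 ^^ m) (Bo lam x0 f))"
    using Suc(1)[OF nB] .
  moreover have "nq L ((Bso lam x0 ^^ Suc m) (Bo lam x0 f)) \<ge>
     nq L ((Bso lam x0 ^^ Suc (Suc m)) f) + (2 * real (Suc m) + 1) * (4 * lam) * nq L ((Bso lam x0 ^^ Suc m) f)"
    by (rule K1[OF assms(1-3) Suc(2) assms(5)])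
  moreover have "nq L ((Bso lam x0 ^^ m) (Bo lam x0 f)) \<ge>
     nq L ((Bso lam x0 ^^ Suc m) f) + (2 * real m + 1) * (4 * lam) * nq L ((Bso lam x0 ^^ m) f)"
    by (rule K1[OF assms(1-3) Suc(2) assms(5)])
  moreover have "0 \<le> nq L ((Bso lam x0 ^^ m) f)" by (rule nq_nonneg[OF C])
  moreover have "0 \<le> nq L ((Bso lam x0 ^^ Suc m) f)" by (rule nq_nonneg[OF C])
  ultimately have X: "nq L ((Bo lam x0 ^^ Suc (Suc m)) f) \<ge> nq L ((Bso lam x0 ^^ Suc (Suc m)) f)
      + (2 * real (Suc m) + 1) * (4 * lam) * nq L ((Bso lam x0 ^^ Suc m) f)
      + (real (Suc m))^2 * (4 * lam) * nq L ((Bso lam x0 ^^ m) (Bo lam x0 f))"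
    and B: "nq L ((Bso lam x0 ^^ m) (Bo lam x0 f)) \<ge> nq L ((Bso lam x0 ^^ Suc m) f)"
    and Y0: "0 \<le> nq L ((Bso lam x0 ^^ m) f)"
    using assms(5) by (smt (verit) mult_nonneg_nonneg of_nat_0_le_iff)+
  have "(real (Suc m))^2 * (4 * lam) * nq L ((Bso lam x0 ^^ m) (Bo lam x0 f)) \<ge>
        (real (Suc m))^2 * (4 * lam) * nq L ((Bso lam x0 ^^ Suc m) f)"
    by (rule mult_left_mono[OF B]) (use assms(5) in simp)
  moreover have "(real (Suc (Suc m)))^2 * (4 * lam) * nq L ((Bso lam x0 ^^ Suc m) f) =
     (2 * real (Suc m) + 1) * (4 * lam) * nq L ((Bso lam x0 ^^ Suc m) f) + (real (Suc m))^2 * (4 * lam) * nq L ((Bso lam x0 ^^ Suc m) f)"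
    by (simp add: power2_eq_square algebra_simps)
  ultimately show ?case using X by linarith
qed

definition Wm :: "real \<Rightarrow> nat \<Rightarrow> (real \<Rightarrow> real) \<Rightarrow> real" where
  "Wm L m f = integral {0..L} (\<lambda>x. ((deriv ^^ m) f x)^2)"

definition Wp :: "real \<Rightarrow> real \<Rightarrow> nat \<Rightarrow> nat \<Rightarrow> (real \<Rightarrow> real) \<Rightarrow> real" where
  "Wp L x0 j m f = integral {0..L} (\<lambda>x. (2 * (x - x0))^(2 * j) * ((deriv ^^ m) f x)^2)"

lemma Dm_Bso:
  assumes "C1 f"
  shows "(deriv ^^ m) (Bso lam x0 f) x = - ((deriv ^^ Suc m) f x + lam * (2 * (x - x0)) * (deriv ^^ m) f x
           + 2 * real m * lam * (deriv ^^ (m - 1)) f x)"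
proof -
  have "(deriv ^^ m) (Bso lam x0 f) = (deriv ^^ m) (\<lambda>y. (-1) * deriv f y + (-1) * (((2*lam) * y + (-2*lam*x0)) * f y))"
    by (simp only: Bso_alt)
  also have "\<dots> = (\<lambda>y. (-1) * (deriv ^^ m) (deriv f) y + (-1) * (deriv ^^ m) (\<lambda>y. ((2*lam) * y + (-2*lam*x0)) * f y) y)"
    by (rule funpow_deriv_lin[OF C1_deriv[OF assms] C1_linmult[OF assms]])
  also have "\<dots> = (\<lambda>y. (-1) * (deriv ^^ Suc m) f y + (-1) * (((2*lam) * y + (-2*lam*x0)) * (deriv ^^ m) f y
      + real m * (2*lam) * (deriv ^^ (m-1)) f y))"
    by (simp only: funpow_deriv_linmult[OF assms] funpow_deriv_Suc')
  finally show ?thesis by (simp add: algebra_simps)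
qed

lemma pw_core:
  fixes A B E pp lam q R Q m :: real
  assumes "0 \<le> q" "q \<le> Q" "\<bar>q * pp\<bar> \<le> R" "0 \<le> m" "0 \<le> lam"
  shows "lam * q * (A + lam * pp * B + 2 * m * lam * E)^2 \<ge>
     lam * q * A^2 + lam^3 * (q * pp^2) * B^2 + lam^2 * ((q * pp) * (2 * A * B))
     - 2 * m * (Q + R) * (A^2 + lam^2 * B^2 + lam^4 * E^2)"
proof -
  define r where "r = q * pp"
  have R0: "0 \<le> R" using assms(3) by linarith
  have X1: "0 \<le> q * (A + lam^2 * E)^2 + (Q - q) * (A^2 + lam^4 * E^2)"
    using assms(1,2) by (intro add_nonneg_nonneg mult_nonneg_nonneg) auto
  have X2: "0 \<le> R * (lam^2 * B^2 + lam^4 * E^2) + 2 * r * (lam^3 * E * B)"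
  proof -
  have rR: "- R \<le> r" "r \<le> R" using assms(3) unfolding r_def by linarith+
  show ?thesis
  proof (cases "0 \<le> r")
    case True
    have "R * (lam^2 * B^2 + lam^4 * E^2) + 2 * r * (lam^3 * E * B) =
          (R - r) * (lam^2 * B^2 + lam^4 * E^2) + r * (lam * B + lam^2 * E)^2"
      by (simp add: power2_eq_square power3_eq_cube algebra_simps)
        (simp add: power_def algebra_simps)
    moreover have "0 \<le> (R - r) * (lam^2 * B^2 + lam^4 * E^2)"
      using rR True by (intro mult_nonneg_nonneg add_nonneg_nonneg) auto
    moreover have "0 \<le> r * (lam * B + lam^2 * E)^2" using True by simp
    ultimately show ?thesis by linarith
  next
    case False
    have "R * (lam^2 * B^2 + lam^4 * E^2) + 2 * r * (lam^3 * E * B) =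
          (R + r) * (lam^2 * B^2 + lam^4 * E^2) + (- r) * (lam * B - lam^2 * E)^2"
      by (simp add: power2_eq_square power3_eq_cube algebra_simps)
        (simp add: power_def algebra_simps)
    moreover have "0 \<le> (R + r) * (lam^2 * B^2 + lam^4 * E^2)"
    proof -
      have "0 \<le> R + r" using rR by linarith
      then show ?thesis by (rule mult_nonneg_nonneg) (intro add_nonneg_nonneg mult_nonneg_nonneg; auto)
    qed
    moreover have "0 \<le> (- r) * (lam * B - lam^2 * E)^2" using False by (intro mult_nonneg_nonneg) auto
    ultimately show ?thesis by linarith
  qed
  qed
  have X3: "0 \<le> 2 * m * Q * lam^2 * B^2 + 2 * m * R * A^2 + 4 * m^2 * lam^3 * q * E^2"
    using assms R0 by (intro add_nonneg_nonneg mult_nonneg_nonneg) auto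
  have "lam * q * (A + lam * pp * B + 2 * m * lam * E)^2 -
     (lam * q * A^2 + lam^3 * (q * pp^2) * B^2 + lam^2 * ((q * pp) * (2 * A * B))
     - 2 * m * (Q + R) * (A^2 + lam^2 * B^2 + lam^4 * E^2)) =
     2 * m * (q * (A + lam^2 * E)^2 + (Q - q) * (A^2 + lam^4 * E^2)) +
     2 * m * (R * (lam^2 * B^2 + lam^4 * E^2) + 2 * r * (lam^3 * E * B)) +
     (2 * m * Q * lam^2 * B^2 + 2 * m * R * A^2 + 4 * m^2 * lam^3 * q * E^2)"
    unfolding r_def by (simp add: power_def algebra_simps)
  moreover have "0 \<le> 2 * m * (q * (A + lam^2 * E)^2 + (Q - q) * (A^2 + lam^4 * E^2))"
    using X1 assms(4) by simp
  moreover have "0 \<le> 2 * m * (R * (lam^2 * B^2 + lam^4 * E^2) + 2 * r * (lam^3 * E * B))"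
    using X2 assms(4) by simp
  ultimately show ?thesis using X3 by linarith
qed

lemma sq3: "(x + y + z)^2 \<le> 3 * (x^2 + y^2 + (z::real)^2)"
proof -
  have "0 \<le> (x - y)^2 + (y - z)^2 + (x - z)^2" by simp
  then show ?thesis by (simp add: power2_eq_square algebra_simps)
qed

lemma pw_full:
  fixes a b e pp lam u q qa qb Q R PP C K G m s z :: real
  assumes "1 \<le> lam" "0 \<le> u" "0 \<le> q" "q \<le> Q" "\<bar>q * pp\<bar> \<le> R" "pp^2 \<le> PP" "0 \<le> m" "0 \<le> C" "0 \<le> K" "0 \<le> s"
    and qa: "qa = q * pp" and qb: "qb = q * pp^2"
    and c1: "C * 2 * m * (Q + R) + 3 * K \<le> G"
    and c2: "C * s * 2 * Q + C * 2 * m * (Q + R) + 3 * K * PP \<le> G"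
    and c3: "C * 2 * m * (Q + R) + 12 * K * m^2 \<le> G * z"
  shows "lam * C * u * (q * (a + lam * pp * b + 2 * m * lam * e)^2) - K * u * (a + lam * pp * b + 2 * m * lam * e)^2 \<ge>
    C * (lam * u * (q * a^2) + lam^3 * u * (qb * b^2)) + C * u * lam^2 * (qa * (2 * a * b) + s * 2 * (q * b^2))
    - G * (u * a^2 + u * lam^2 * b^2 + z * (u * lam^4 * e^2))"
proof -
  define X where "X = a + lam * pp * b + 2 * m * lam * e"
  have S1: "0 \<le> lam * q * X^2 - (lam * q * a^2 + lam^3 * (q * pp^2) * b^2 + lam^2 * ((q * pp) * (2 * a * b))
     - 2 * m * (Q + R) * (a^2 + lam^2 * b^2 + lam^4 * e^2))"
    using pw_core[OF assms(3,4,5,7), of lam a b e] assms(1) unfolding X_def by linarith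
  have "X^2 \<le> 3 * (a^2 + (lam * pp * b)^2 + (2 * m * lam * e)^2)"
    unfolding X_def by (rule sq3)
  also have "(lam * pp * b)^2 = lam^2 * pp^2 * b^2" by (simp add: power_mult_distrib)
  also have "(2 * m * lam * e)^2 = 4 * m^2 * lam^2 * e^2" by (simp add: power_mult_distrib)
  also have "lam^2 * pp^2 * b^2 \<le> lam^2 * PP * b^2"
    using assms(6) by (intro mult_right_mono mult_left_mono) auto
  also have "4 * m^2 * lam^2 * e^2 \<le> 4 * m^2 * lam^4 * e^2"
  proof -
    have "lam^2 \<le> lam^4" using assms(1) by (intro power_increasing) auto
    then show ?thesis by (intro mult_right_mono mult_left_mono) auto
  qed
  finally have S2: "0 \<le> 3 * (a^2 + lam^2 * PP * b^2 + 4 * m^2 * lam^4 * e^2) - X^2" by simp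
  have T1: "0 \<le> C * u * (lam * q * X^2 - (lam * q * a^2 + lam^3 * (q * pp^2) * b^2 + lam^2 * ((q * pp) * (2 * a * b))
     - 2 * m * (Q + R) * (a^2 + lam^2 * b^2 + lam^4 * e^2)))"
    using S1 assms by simp
  have T2: "0 \<le> K * u * (3 * (a^2 + lam^2 * PP * b^2 + 4 * m^2 * lam^4 * e^2) - X^2)"
    using S2 assms by simp
  have T3: "0 \<le> C * u * lam^2 * s * 2 * (Q - q) * b^2"
    using assms by simp
  have T4: "0 \<le> (G - (C * 2 * m * (Q + R) + 3 * K)) * (u * a^2)"
    using assms c1 by simp
  have T5: "0 \<le> (G - (C * s * 2 * Q + C * 2 * m * (Q + R) + 3 * K * PP)) * (u * lam^2 * b^2)"
    using assms c2 by simp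
  have T6: "0 \<le> (G * z - (C * 2 * m * (Q + R) + 12 * K * m^2)) * (u * lam^4 * e^2)"
    using assms c3 by simp
  have "lam * C * u * (q * X^2) - K * u * X^2 -
    (C * (lam * u * (q * a^2) + lam^3 * u * (qb * b^2)) + C * u * lam^2 * (qa * (2 * a * b) + s * 2 * (q * b^2))
    - G * (u * a^2 + u * lam^2 * b^2 + z * (u * lam^4 * e^2))) =
    C * u * (lam * q * X^2 - (lam * q * a^2 + lam^3 * (q * pp^2) * b^2 + lam^2 * ((q * pp) * (2 * a * b))
     - 2 * m * (Q + R) * (a^2 + lam^2 * b^2 + lam^4 * e^2))) +
    K * u * (3 * (a^2 + lam^2 * PP * b^2 + 4 * m^2 * lam^4 * e^2) - X^2) +
    C * u * lam^2 * s * 2 * (Q - q) * b^2 +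
    (G - (C * 2 * m * (Q + R) + 3 * K)) * (u * a^2) +
    (G - (C * s * 2 * Q + C * 2 * m * (Q + R) + 3 * K * PP)) * (u * lam^2 * b^2) +
    (G * z - (C * 2 * m * (Q + R) + 12 * K * m^2)) * (u * lam^4 * e^2)"
    unfolding qa qb by (simp add: algebra_simps)
  then show ?thesis using T1 T2 T3 T4 T5 T6 unfolding X_def by linarith
qed

lemma pascal_sum:
  fixes F :: "nat \<Rightarrow> real"
  shows "(\<Sum>m\<le>k. real (k choose m) * (F (Suc m) + F m)) = (\<Sum>m\<le>Suc k. real (Suc k choose m) * F m)"
proof -
  have a: "(\<Sum>m\<le>k. real (k choose m) * F m) = (\<Sum>m\<le>Suc k. real (k choose m) * F m)"
    by simp
  also have "\<dots> = F 0 + (\<Sum>m\<le>k. real (k choose Suc m) * F (Suc m))"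
    by (subst sum.atMost_Suc_shift) simp
  finally have a': "(\<Sum>m\<le>k. real (k choose m) * F m) = F 0 + (\<Sum>m\<le>k. real (k choose Suc m) * F (Suc m))" .
  have "(\<Sum>m\<le>Suc k. real (Suc k choose m) * F m) = F 0 + (\<Sum>m\<le>k. real (Suc k choose Suc m) * F (Suc m))"
    by (subst sum.atMost_Suc_shift) simp
  also have "\<dots> = F 0 + (\<Sum>m\<le>k. real (k choose m) * F (Suc m)) + (\<Sum>m\<le>k. real (k choose Suc m) * F (Suc m))"
    by (simp add: sum.distrib algebra_simps)
  finally show ?thesis using a' by (simp add: sum.distrib algebra_simps)
qed

lemma mono3:
  fixes a b c a' b' c' :: real
  shows "0 \<le> a \<Longrightarrow> a \<le> a' \<Longrightarrow> 0 \<le> b \<Longrightarrow> b \<le> b' \<Longrightarrow> 0 \<le> c \<Longrightarrow> c \<le> c' \<Longrightarrow> a * b * c \<le> a' * b' * c'"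
  by (meson dual_order.trans mult_mono mult_nonneg_nonneg)

lemma ibp_pow:
  assumes "0 \<le> L" "0 < c" "d < L" "nice c d F"
  shows "((\<lambda>x. (2 * (x - x0))^(2 * j + 1) * (2 * deriv F x * F x) + (2 * real j + 1) * 2 * ((2 * (x - x0))^(2 * j) * (F x)^2))
     has_integral 0) {0..L}"
proof -
  have C: "C1 F" "Z c d F" using assms(4) by (auto simp: nice_def)
  have f0: "F 0 = 0" "F L = 0" using assms(2,3) C(2) by (auto simp: Z_def)
  have "((\<lambda>x. (2 * (x - x0))^(2 * j + 1) * (2 * deriv F x * F x) + (2 * real j + 1) * 2 * ((2 * (x - x0))^(2 * j) * (F x)^2))
     has_integral ((2 * (L - x0))^(2 * j + 1) * (F L)^2 - (2 * (0 - x0))^(2 * j + 1) * (F 0)^2)) {0..L}"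
  proof (rule fundamental_theorem_of_calculus[OF assms(1)])
    fix x assume "x \<in> {0..L}"
    have d1: "((\<lambda>x. (2 * (x - x0))^Suc (2 * j)) has_field_derivative ((1 + real (2 * j)) * (2 * (2 * (x - x0))^(2 * j)))) (at x)"
      by (intro DERIV_power_Suc) (auto intro!: derivative_eq_intros)
    have d2: "((\<lambda>x. F x * F x) has_field_derivative (deriv F x * F x + F x * deriv F x)) (at x)"
      by (auto intro!: derivative_eq_intros C1_DERIV0[OF C(1)])
    have d3: "((\<lambda>x. (2 * (x - x0))^Suc (2 * j) * (F x * F x)) has_field_derivative
        ((2 * (x - x0))^(2 * j + 1) * (2 * deriv F x * F x) + (2 * real j + 1) * 2 * ((2 * (x - x0))^(2 * j) * (F x)^2))) (at x)"
      using DERIV_mult[OF d1 d2] by (simp add: power2_eq_square algebra_simps)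
    have eq: "(\<lambda>x. (2 * (x - x0))^(2 * j + 1) * (F x)^2) = (\<lambda>x. (2 * (x - x0))^Suc (2 * j) * (F x * F x))"
      by (simp add: power2_eq_square)
    from d3 have "((\<lambda>x. (2 * (x - x0))^(2 * j + 1) * (F x)^2) has_field_derivative
        ((2 * (x - x0))^(2 * j + 1) * (2 * deriv F x * F x) + (2 * real j + 1) * 2 * ((2 * (x - x0))^(2 * j) * (F x)^2))) (at x)"
      by (simp only: eq)
    then show "((\<lambda>x. (2 * (x - x0))^(2 * j + 1) * (F x)^2) has_vector_derivative
        ((2 * (x - x0))^(2 * j + 1) * (2 * deriv F x * F x) + (2 * real j + 1) * 2 * ((2 * (x - x0))^(2 * j) * (F x)^2)))
        (at x within {0..L})"
      by (simp add: has_real_derivative_iff_has_vector_derivative[symmetric] has_field_derivative_at_within)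
  qed
  then show ?thesis using f0 by simp
qed

lemma cont_int: "continuous_on {0..L} (f::real\<Rightarrow>real) \<Longrightarrow> (f has_integral integral {0..L} f) {0..L}"
  using integrable_continuous_interval has_integral_integral by blast

lemma even_pow_nonneg: "0 \<le> (t::real)^(2*j)"
  by (simp add: power_mult)

lemma Wm_nonneg: "C1 f \<Longrightarrow> 0 \<le> Wm L m f"
  unfolding Wm_def
  by (rule integral_nonneg) (auto intro!: integrable_continuous_interval continuous_intros)

lemma Elem:
  assumes "0 < L"
  shows "\<exists>K\<ge>0. \<forall>c d f lam. 0 < c \<longrightarrow> d < L \<longrightarrow> nice c d f \<longrightarrow> 1 \<le> lam \<longrightarrow>
    lam * (\<Sum>m\<le>k. real (k choose m) * lam^(2*(k-m)) * Wp L x0 (k-m) m f) - K * (\<Sum>m\<le>k. lam^(2*(k-m)) * Wm L m f)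
    \<le> lam * nq L ((Bso lam x0 ^^ k) f)"
proof (induction k)
  case 0
  show ?case
  proof (intro exI[of _ 0] conjI allI impI)
    fix c d f and lam :: real
    show "lam * (\<Sum>m\<le>0. real (0 choose m) * lam^(2*(0-m)) * Wp L x0 (0-m) m f) - 0 * (\<Sum>m\<le>0. lam^(2*(0-m)) * Wm L m f)
      \<le> lam * nq L ((Bso lam x0 ^^ 0) f)"
      by (simp add: Wp_def nq_def ip_def power2_eq_square)
  qed simp
next
  case (Suc k)
  from Suc obtain K where K0: "0 \<le> K" and IH: "\<forall>c d f lam. 0 < c \<longrightarrow> d < L \<longrightarrow> nice c d f \<longrightarrow> 1 \<le> lam \<longrightarrow>
    lam * (\<Sum>m\<le>k. real (k choose m) * lam^(2*(k-m)) * Wp L x0 (k-m) m f) - K * (\<Sum>m\<le>k. lam^(2*(k-m)) * Wm L m f)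
    \<le> lam * nq L ((Bso lam x0 ^^ k) f)" by blast
  define P where "P = 1 + 2 * (\<bar>x0\<bar> + L)"
  define M where "M = P^(2*k+2)"
  define G where "G = 2^k * (2*real k*(2*M) + (2*real k+1)*2*M) + 3*K*(1 + M + 4*(real k)^2)"
  have P1: "1 \<le> P" using assms by (simp add: P_def)
  have PM: "P^i \<le> M" if "i \<le> 2*k+2" for i unfolding M_def using P1 that by (intro power_increasing) auto
  have M1: "1 \<le> M" using PM[of 0] by simp
  have G0: "0 \<le> G" unfolding G_def using M1 K0 by (intro add_nonneg_nonneg mult_nonneg_nonneg) auto
  show ?case
  proof (intro exI[of _ "3 * G * (real k + 1)"] conjI allI impI)
    show "0 \<le> 3 * G * (real k + 1)" using G0 by simp
    fix c d f and lam :: real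
    assume c: "0 < c" and d: "d < L" and nf: "nice c d f" and lam: "1 \<le> lam"
    have Cf: "C1 f" using nf by (simp add: nice_def)
    define g where "g = Bso lam x0 f"
    have ng: "nice c d g" unfolding g_def by (rule nice_Bso[OF nf])
    have Cg: "C1 g" using ng by (simp add: nice_def)
    note IHg = IH[rule_format, OF c d ng lam]
    define F where "F m' = lam^(2*(Suc k - m')+1) * Wp L x0 (Suc k - m') m' f" for m'
    define e where "e m' = lam^(2*(Suc k - m')) * Wm L m' f" for m'
    define ep where "ep m = (if m = 0 then 0 else e (m - 1))" for m
    have e0: "0 \<le> e m'" for m' unfolding e_def using Wm_nonneg[OF Cf] lam by simp
    have PMm: "real (k choose m) * (F (Suc m) + F m) - G * (e (Suc m) + e m + ep m) \<le>
       lam * (real (k choose m) * lam^(2*(k-m)) * Wp L x0 (k-m) m g) - K * (lam^(2*(k-m)) * Wm L m g)"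
      if mk: "m \<le> k" for m
    proof -
      define j where "j = k - m"
      define C where "C = real (k choose m)"
      define u where "u = lam^(2*j)"
      define z where "z = (if m = 0 then 0 else (1::real))"
      define pp where "pp x = 2*(x - x0)" for x
      define a where "a x = (deriv ^^ Suc m) f x" for x
      define b where "b x = (deriv ^^ m) f x" for x
      define ee where "ee x = (deriv ^^ (m-1)) f x" for x
      have Dg: "((deriv ^^ m) g x)^2 = (a x + lam * pp x * b x + 2 * real m * lam * ee x)^2" for x
        unfolding g_def a_def b_def ee_def pp_def by (simp only: Dm_Bso[OF Cf] power2_minus)
      have HL: "((\<lambda>x. lam * C * u * ((pp x)^(2*j) * (a x + lam * pp x * b x + 2 * real m * lam * ee x)^2)
            - K * u * (a x + lam * pp x * b x + 2 * real m * lam * ee x)^2)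
          has_integral ((lam * C * u) * Wp L x0 j m g - (K * u) * Wm L m g)) {0..L}"
      proof -
        have i1: "((\<lambda>x. (pp x)^(2*j) * ((deriv ^^ m) g x)^2) has_integral Wp L x0 j m g) {0..L}"
          unfolding Wp_def pp_def by (rule cont_int) (auto intro!: continuous_intros Cg)
        have i2: "((\<lambda>x. ((deriv ^^ m) g x)^2) has_integral Wm L m g) {0..L}"
          unfolding Wm_def by (rule cont_int) (auto intro!: continuous_intros Cg)
        have "((\<lambda>x. (lam * C * u) * ((pp x)^(2*j) * ((deriv ^^ m) g x)^2) - (K * u) * ((deriv ^^ m) g x)^2)
           has_integral ((lam * C * u) * Wp L x0 j m g - (K * u) * Wm L m g)) {0..L}"
          by (intro has_integral_diff has_integral_mult_right i1 i2)
        then show ?thesis by (simp only: Dg)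
      qed
      have nD: "nice c d ((deriv ^^ m) f)"
        using nf C1_funpow[OF Cf, of m] Z_funpow[of c d f m] by (auto simp: nice_def)
      have j3: "((\<lambda>x. (pp x)^(2*j+1) * (2 * a x * b x) + (2 * real j + 1) * 2 * ((pp x)^(2*j) * (b x)^2)) has_integral 0) {0..L}"
        using ibp_pow[OF less_imp_le[OF assms] c d nD, of x0 j] unfolding pp_def a_def b_def by simp
      have j1: "((\<lambda>x. (pp x)^(2*j) * (a x)^2) has_integral Wp L x0 j (Suc m) f) {0..L}"
        unfolding Wp_def pp_def a_def by (rule cont_int) (auto intro!: continuous_intros Cf C1_funpow[OF Cf])
      have j2: "((\<lambda>x. (pp x)^(2*Suc j) * (b x)^2) has_integral Wp L x0 (Suc j) m f) {0..L}"
        unfolding Wp_def pp_def b_def by (rule cont_int) (auto intro!: continuous_intros Cf C1_funpow[OF Cf])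
      have j4: "((\<lambda>x. (a x)^2) has_integral Wm L (Suc m) f) {0..L}"
        unfolding Wm_def a_def by (rule cont_int) (auto intro!: continuous_intros Cf C1_funpow[OF Cf])
      have j5: "((\<lambda>x. (b x)^2) has_integral Wm L m f) {0..L}"
        unfolding Wm_def b_def by (rule cont_int) (auto intro!: continuous_intros Cf C1_funpow[OF Cf])
      have j6: "((\<lambda>x. (ee x)^2) has_integral Wm L (m - 1) f) {0..L}"
        unfolding Wm_def ee_def by (rule cont_int) (auto intro!: continuous_intros Cf C1_funpow[OF Cf])
      have HR: "((\<lambda>x. C * (lam * u * ((pp x)^(2*j) * (a x)^2) + lam^3 * u * ((pp x)^(2*Suc j) * (b x)^2))
          + C * u * lam^2 * ((pp x)^(2*j+1) * (2 * a x * b x) + (2 * real j + 1) * 2 * ((pp x)^(2*j) * (b x)^2))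
          - G * (u * (a x)^2 + u * lam^2 * (b x)^2 + z * (u * lam^4 * (ee x)^2)))
        has_integral (C * (lam * u * Wp L x0 j (Suc m) f + lam^3 * u * Wp L x0 (Suc j) m f) + C * u * lam^2 * 0
          - G * (u * Wm L (Suc m) f + u * lam^2 * Wm L m f + z * (u * lam^4 * Wm L (m - 1) f)))) {0..L}"
        by (intro has_integral_diff has_integral_add has_integral_mult_right j1 j2 j3 j4 j5 j6)
      have pw: "C * (lam * u * ((pp x)^(2*j) * (a x)^2) + lam^3 * u * ((pp x)^(2*Suc j) * (b x)^2))
          + C * u * lam^2 * ((pp x)^(2*j+1) * (2 * a x * b x) + (2 * real j + 1) * 2 * ((pp x)^(2*j) * (b x)^2))
          - G * (u * (a x)^2 + u * lam^2 * (b x)^2 + z * (u * lam^4 * (ee x)^2))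
        \<le> lam * C * u * ((pp x)^(2*j) * (a x + lam * pp x * b x + 2 * real m * lam * ee x)^2)
            - K * u * (a x + lam * pp x * b x + 2 * real m * lam * ee x)^2"
        if x: "x \<in> {0..L}" for x
      proof (rule pw_full)
        have ppP: "\<bar>pp x\<bar> \<le> P" using x unfolding pp_def P_def by (auto simp: abs_le_iff)
        show "1 \<le> lam" by (rule lam)
        show "0 \<le> u" unfolding u_def using lam by simp
        show "0 \<le> (pp x)^(2*j)" by (rule even_pow_nonneg)
        show "(pp x)^(2*j) \<le> P^(2*j)"
        proof -
          have "(pp x)^(2*j) = \<bar>pp x\<bar>^(2*j)" by (simp add: power_even_abs)
          also have "\<dots> \<le> P^(2*j)" by (rule power_mono[OF ppP]) simp
          finally show ?thesis .
        qed
        show "\<bar>(pp x)^(2*j) * pp x\<bar> \<le> P^(2*j+1)"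
        proof -
          have "\<bar>(pp x)^(2*j) * pp x\<bar> = \<bar>pp x\<bar>^(2*j+1)" by (simp add: abs_mult power_abs)
          also have "\<dots> \<le> P^(2*j+1)" by (rule power_mono[OF ppP]) simp
          finally show ?thesis .
        qed
        show "(pp x)^2 \<le> P^2"
        proof -
          have "(pp x)^2 = \<bar>pp x\<bar>^2" by simp
          also have "\<dots> \<le> P^2" by (rule power_mono[OF ppP]) simp
          finally show ?thesis .
        qed
        show "0 \<le> real m" by simp
        show "0 \<le> C" unfolding C_def by simp
        show "0 \<le> K" by (rule K0)
        show "0 \<le> 2 * real j + 1" by simp
        show "(pp x)^(2*j+1) = (pp x)^(2*j) * pp x" by simp
        show "(pp x)^(2*Suc j) = (pp x)^(2*j) * (pp x)^2" by (simp add: power_add[symmetric])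
        have Cb: "C \<le> 2^k" unfolding C_def using binomial_le_pow2[of k m]
          by (metis of_nat_le_iff of_nat_numeral of_nat_power)
        have jk: "j \<le> k" unfolding j_def by simp
        have QM: "P^(2*j) \<le> M" by (rule PM) (use jk in simp)
        have RM: "P^(2*j+1) \<le> M" by (rule PM) (use jk in simp)
        have P2M: "P^2 \<le> M" by (rule PM) simp
        have Q0: "0 \<le> P^(2*j)" "0 \<le> P^(2*j+1)" using P1 by auto
        have e1: "C * 2 * real m * (P^(2*j) + P^(2*j+1)) \<le> 2^k * (2 * real k * (2 * M))"
        proof -
          have "C * (2 * real m) * (P^(2*j) + P^(2*j+1)) \<le> 2^k * (2 * real k) * (2 * M)"
            by (rule mono3) (use Cb mk QM RM Q0 C_def in auto)
          then show ?thesis by (simp add: algebra_simps)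
        qed
        have e2: "C * (2 * real j + 1) * 2 * P^(2*j) \<le> 2^k * ((2 * real k + 1) * 2 * M)"
        proof -
          have "C * (2 * real j + 1) * (2 * P^(2*j)) \<le> 2^k * (2 * real k + 1) * (2 * M)"
            by (rule mono3) (use Cb jk QM Q0 C_def in auto)
          then show ?thesis by (simp add: algebra_simps)
        qed
        have e3: "3 * K * P^2 \<le> 3 * K * M" using P2M K0 by (intro mult_left_mono) auto
        have e4: "12 * K * (real m)^2 \<le> 3 * K * (4 * (real k)^2)"
        proof -
          have "(real m)^2 \<le> (real k)^2" using mk by (intro power_mono) auto
          then show ?thesis using K0 by (simp add: algebra_simps mult_left_mono)
        qed
        have t1: "0 \<le> 2^k * ((2 * real k + 1) * 2 * M)" "0 \<le> 2^k * (2 * real k * (2 * M))"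
          "0 \<le> 3 * K * M" "0 \<le> 3 * K * (4 * (real k)^2)" "0 \<le> 3 * K"
          using M1 K0 by auto
        have Gx: "G = 2^k * (2 * real k * (2 * M)) + 2^k * ((2 * real k + 1) * 2 * M) + 3 * K + 3 * K * M + 3 * K * (4 * (real k)^2)"
          unfolding G_def by (simp add: algebra_simps)
        show "C * 2 * real m * (P^(2*j) + P^(2*j+1)) + 3 * K \<le> G"
          using e1 t1 unfolding Gx by linarith
        show "C * (2 * real j + 1) * 2 * P^(2*j) + C * 2 * real m * (P^(2*j) + P^(2*j+1)) + 3 * K * P^2 \<le> G"
          using e1 e2 e3 t1 unfolding Gx by linarith
        show "C * 2 * real m * (P^(2*j) + P^(2*j+1)) + 12 * K * (real m)^2 \<le> G * z"
        proof (cases "m = 0")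
          case True then show ?thesis by (simp add: z_def)
        next
          case False
          have "G * z = G" using False by (simp add: z_def)
          then show ?thesis using e1 e4 t1 unfolding Gx by linarith
        qed
      qed
      have le: "C * (lam * u * Wp L x0 j (Suc m) f + lam^3 * u * Wp L x0 (Suc j) m f) + C * u * lam^2 * 0
          - G * (u * Wm L (Suc m) f + u * lam^2 * Wm L m f + z * (u * lam^4 * Wm L (m - 1) f))
        \<le> (lam * C * u) * Wp L x0 j m g - (K * u) * Wm L m g"
        by (rule has_integral_le[OF HR HL pw])
      have pw1: "lam^(2*j+1) = lam * u" unfolding u_def by simp
      have sj: "Suc k - m = Suc j" unfolding j_def using mk by simp
      have F1: "F (Suc m) = lam * u * Wp L x0 j (Suc m) f" unfolding F_def using pw1 by (simp add: j_def)
      have pw2: "lam^(2*Suc j+1) = lam^3 * u"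
      proof -
        have "2*Suc j+1 = 2*j + 3" by simp
        then have "lam^(2*Suc j+1) = lam^(2*j) * lam^3" by (simp only: power_add)
        then show ?thesis unfolding u_def by simp
      qed
      have F2: "F m = lam^3 * u * Wp L x0 (Suc j) m f" unfolding F_def sj pw2 by simp
      have E1: "e (Suc m) = u * Wm L (Suc m) f" unfolding e_def u_def j_def by simp
      have pw3: "lam^(2*Suc j) = u * lam^2"
      proof -
        have "2*Suc j = 2*j + 2" by simp
        then show ?thesis unfolding u_def by (simp only: power_add)
      qed
      have E2: "e m = u * lam^2 * Wm L m f" unfolding e_def sj pw3 by simp
      have E3: "ep m = z * (u * lam^4 * Wm L (m - 1) f)"
      proof (cases "m = 0")
        case True then show ?thesis by (simp add: ep_def z_def)
      next
        case False
        then have s2: "Suc k - (m - 1) = j + 2" unfolding j_def using mk by simp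
        have pw4: "lam^(2*(j+2)) = u * lam^4"
        proof -
          have "2*(j+2) = 2*j + 4" by simp
          then show ?thesis unfolding u_def by (simp only: power_add)
        qed
        show ?thesis using False unfolding ep_def z_def e_def s2 pw4 by simp
      qed
      show ?thesis using le unfolding F1 F2 E1 E2 E3 C_def[symmetric] j_def[symmetric] u_def[symmetric]
        by (simp add: algebra_simps)
    qed
    have S: "(\<Sum>m\<le>k. real (k choose m) * (F (Suc m) + F m) - G * (e (Suc m) + e m + ep m)) \<le>
       (\<Sum>m\<le>k. lam * (real (k choose m) * lam^(2*(k-m)) * Wp L x0 (k-m) m g) - K * (lam^(2*(k-m)) * Wm L m g))"
      by (rule sum_mono) (use PMm in auto)
    have S1: "(\<Sum>m\<le>k. lam * (real (k choose m) * lam^(2*(k-m)) * Wp L x0 (k-m) m g) - K * (lam^(2*(k-m)) * Wm L m g)) =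
       lam * (\<Sum>m\<le>k. real (k choose m) * lam^(2*(k-m)) * Wp L x0 (k-m) m g) - K * (\<Sum>m\<le>k. lam^(2*(k-m)) * Wm L m g)"
      by (simp add: sum_subtractf sum_distrib_left)
    define Full where "Full = (\<Sum>m\<le>Suc k. e m)"
    have Full0: "0 \<le> Full" unfolding Full_def by (rule sum_nonneg) (use e0 in auto)
    have eb: "e (Suc m) + e m + ep m \<le> 3 * Full" if "m \<le> k" for m
    proof -
      have a1: "e i \<le> Full" if "i \<le> Suc k" for i
        unfolding Full_def by (rule member_le_sum) (use that e0 in auto)
      have "ep m \<le> Full" unfolding ep_def using a1[of "m - 1"] Full0 \<open>m \<le> k\<close> by auto
      then show ?thesis using a1[of "Suc m"] a1[of m] \<open>m \<le> k\<close> by auto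
    qed
    have Eb: "(\<Sum>m\<le>k. e (Suc m) + e m + ep m) \<le> (real k + 1) * (3 * Full)"
    proof -
      have "(\<Sum>m\<le>k. e (Suc m) + e m + ep m) \<le> (\<Sum>m\<le>k. 3 * Full)"
        by (rule sum_mono) (use eb in auto)
      then show ?thesis by (simp add: add.commute)
    qed
    have S2: "(\<Sum>m\<le>k. real (k choose m) * (F (Suc m) + F m) - G * (e (Suc m) + e m + ep m)) =
      (\<Sum>m\<le>Suc k. real (Suc k choose m) * F m) - G * (\<Sum>m\<le>k. e (Suc m) + e m + ep m)"
      by (simp add: sum_subtractf sum_distrib_left pascal_sum)
    have T1: "lam * (\<Sum>m\<le>Suc k. real (Suc k choose m) * lam^(2*(Suc k-m)) * Wp L x0 (Suc k-m) m f) =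
       (\<Sum>m\<le>Suc k. real (Suc k choose m) * F m)"
      unfolding F_def sum_distrib_left by (rule sum.cong) (simp_all add: algebra_simps)
    have T2: "(\<Sum>m\<le>Suc k. lam^(2*(Suc k-m)) * Wm L m f) = Full"
      unfolding Full_def e_def by simp
    have T3: "nq L ((Bso lam x0 ^^ Suc k) f) = nq L ((Bso lam x0 ^^ k) g)"
      unfolding g_def by (simp only: funpow_Suc_right o_apply)
    have "G * (\<Sum>m\<le>k. e (Suc m) + e m + ep m) \<le> G * ((real k + 1) * (3 * Full))"
      by (rule mult_left_mono[OF Eb G0])
    then show "lam * (\<Sum>m\<le>Suc k. real (Suc k choose m) * lam^(2*(Suc k-m)) * Wp L x0 (Suc k-m) m f)
       - 3 * G * (real k + 1) * (\<Sum>m\<le>Suc k. lam^(2*(Suc k-m)) * Wm L m f)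
       \<le> lam * nq L ((Bso lam x0 ^^ Suc k) f)"
      unfolding T1 T2 T3 using S S1 S2 IHg by (simp add: algebra_simps)
  qed
qed

definition D2 :: "(real \<Rightarrow> real \<Rightarrow> real) \<Rightarrow> bool" where
  "D2 f \<longleftrightarrow> (\<forall>z. (\<lambda>p. f (fst p) (snd p)) differentiable (at z))"

lemma ap_Cons: "apply_partials (b # ds) f = apply_partials ds (if b then pt f else px f)"
  by (simp add: apply_partials_def)

lemma ap_Nil: "apply_partials [] f = f"
  by (simp add: apply_partials_def)

lemma smooth2_D2: "smooth2 f \<Longrightarrow> D2 (apply_partials ds f)"
  by (simp add: smooth2_def D2_def)

lemma smooth2_D2_0: "smooth2 f \<Longrightarrow> D2 f"
  using smooth2_D2[of f "[]"] by (simp add: ap_Nil)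

lemma smooth2_pt: assumes "smooth2 f" shows "smooth2 (pt f)"
  unfolding smooth2_def
proof (intro allI)
  fix ds z
  have e: "apply_partials ds (pt f) = apply_partials (True # ds) f" by (simp add: ap_Cons)
  show "(\<lambda>p. apply_partials ds (pt f) (fst p) (snd p)) differentiable at z"
    unfolding e using assms unfolding smooth2_def by blast
qed

lemma smooth2_px: assumes "smooth2 f" shows "smooth2 (px f)"
  unfolding smooth2_def
proof (intro allI)
  fix ds z
  have e: "apply_partials ds (px f) = apply_partials (False # ds) f" by (simp add: ap_Cons)
  show "(\<lambda>p. apply_partials ds (px f) (fst p) (snd p)) differentiable at z"
    unfolding e using assms unfolding smooth2_def by blast
qed

lemma smooth2_px_pow: "smooth2 f \<Longrightarrow> smooth2 ((px ^^ k) f)"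
  by (induction k) (auto intro: smooth2_px)

lemma smooth2_coinduct:
  assumes "f \<in> K" and step: "\<And>g. g \<in> K \<Longrightarrow> D2 g \<and> pt g \<in> K \<and> px g \<in> K"
  shows "smooth2 f"
proof -
  have "apply_partials ds g \<in> K" if "g \<in> K" for ds g
    using that by (induction ds arbitrary: g) (auto simp: ap_Nil ap_Cons dest: step)
  note A = this
  show ?thesis unfolding smooth2_def
  proof (intro allI)
    fix ds z
    have "apply_partials ds f \<in> K" by (rule A[OF assms(1)])
    then have "D2 (apply_partials ds f)" using step by blast
    then show "(\<lambda>p. apply_partials ds f (fst p) (snd p)) differentiable at z" unfolding D2_def by blast
  qed
qed

lemma ap_replicate: "apply_partials (replicate k False) f = (px ^^ k) f"
proof (induction k arbitrary: f)
  case 0 then show ?case by (simp add: ap_Nil)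
next
  case (Suc k) then show ?case by (simp add: ap_Cons funpow_Suc_right del: funpow.simps)
qed

lemma D2_t:
  assumes "D2 f"
  shows "((\<lambda>s. f s x) has_field_derivative pt f t x) (at t)"
proof -
  have d: "(\<lambda>s. (s, x)) differentiable (at t)"
    unfolding differentiable_def by (rule exI) (auto intro!: derivative_eq_intros)
  have "(\<lambda>s. (\<lambda>p. f (fst p) (snd p)) (s, x)) differentiable (at t)"
    by (rule differentiable_compose[OF _ d]) (use assms in \<open>auto simp: D2_def\<close>)
  then have "(\<lambda>s. f s x) differentiable (at t)" by simp
  then obtain D where D: "((\<lambda>s. f s x) has_real_derivative D) (at t)" by (auto simp: real_differentiable_def)
  then have "pt f t x = D" unfolding pt_def by (simp add: DERIV_imp_deriv)
  with D show ?thesis by simp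
qed

lemma D2_x:
  assumes "D2 f"
  shows "((\<lambda>y. f t y) has_field_derivative px f t x) (at x)"
proof -
  have d: "(\<lambda>y. (t, y)) differentiable (at x)"
    unfolding differentiable_def by (rule exI) (auto intro!: derivative_eq_intros)
  have "(\<lambda>y. (\<lambda>p. f (fst p) (snd p)) (t, y)) differentiable (at x)"
    by (rule differentiable_compose[OF _ d]) (use assms in \<open>auto simp: D2_def\<close>)
  then have "(\<lambda>y. f t y) differentiable (at x)" by simp
  then obtain D where D: "((\<lambda>y. f t y) has_real_derivative D) (at x)" by (auto simp: real_differentiable_def)
  then have "px f t x = D" unfolding px_def by (simp add: DERIV_imp_deriv)
  with D show ?thesis by simp
qed

lemma D2_t_fd: "D2 f \<Longrightarrow> (\<lambda>s. f s x) field_differentiable (at t)"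
  using D2_t field_differentiable_def by blast

lemma D2_x_fd: "D2 f \<Longrightarrow> (\<lambda>y. f t y) field_differentiable (at x)"
  using D2_x field_differentiable_def by blast

lemma D2_cont: "D2 f \<Longrightarrow> continuous_on S (\<lambda>p. f (fst p) (snd p))"
  unfolding D2_def
  by (meson continuous_at_imp_continuous_on differentiable_imp_continuous_within)

lemma D2_cont': "D2 f \<Longrightarrow> continuous_on S (\<lambda>(t, x). f t x)"
  using D2_cont[of f S] by (simp add: case_prod_beta')

lemma D2_cont_t: assumes "D2 f" shows "continuous_on S (\<lambda>s. f s x)"
proof (rule continuous_at_imp_continuous_on, intro ballI)
  fix s assume "s \<in> S"
  show "isCont (\<lambda>s. f s x) s"
    using field_differentiable_imp_continuous_at[OF D2_t_fd[OF assms, of x s]] by simp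
qed

lemma D2_cont_x: assumes "D2 f" shows "continuous_on S (\<lambda>y. f t y)"
proof (rule continuous_at_imp_continuous_on, intro ballI)
  fix y assume "y \<in> S"
  show "isCont (\<lambda>y. f t y) y"
    using field_differentiable_imp_continuous_at[OF D2_x_fd[OF assms, of t y]] by simp
qed

lemma ap_pt_px: "apply_partials [False, True] f = pt (px f)"
  by (simp add: ap_Cons ap_Nil)

lemma schwarz:
  assumes "smooth2 f"
  shows "pt (px f) = px (pt f)"
proof (intro ext)
  fix t x :: real
  define a where "a = x - 1"
  define b where "b = x + 1"
  have Df: "D2 f" by (rule smooth2_D2_0[OF assms])
  have Dpx: "D2 (px f)" by (rule smooth2_D2_0[OF smooth2_px[OF assms]])
  have Dptpx: "D2 (pt (px f))" using smooth2_D2[OF assms, of "[False, True]"] by (simp add: ap_pt_px)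
  have Dpt: "D2 (pt f)" by (rule smooth2_D2_0[OF smooth2_pt[OF assms]])
  have ftc: "f s y - f s a = integral {a..y} (\<lambda>z. px f s z)" if "a \<le> y" for s y
  proof -
    have "((\<lambda>z. px f s z) has_integral (f s y - f s a)) {a..y}"
    proof (rule fundamental_theorem_of_calculus[OF that])
      fix z assume "z \<in> {a..y}"
      show "((\<lambda>y. f s y) has_vector_derivative px f s z) (at z within {a..y})"
        using D2_x[OF Df, of s z] by (simp add: has_real_derivative_iff_has_vector_derivative[symmetric] has_field_derivative_at_within)
    qed
    then show ?thesis by (simp add: integral_unique)
  qed
  have lb: "((\<lambda>s. integral (cbox a y) (\<lambda>z. px f s z)) has_field_derivative integral (cbox a y) (\<lambda>z. pt (px f) s z)) (at s within UNIV)"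
    for s y
  proof (rule leibniz_rule_field_derivative[of UNIV a y "\<lambda>s z. px f s z" "\<lambda>s z. pt (px f) s z" s])
    show "\<And>x t. x \<in> UNIV \<Longrightarrow> t \<in> cbox a y \<Longrightarrow> ((\<lambda>x. px f x t) has_field_derivative pt (px f) x t) (at x within UNIV)"
      using D2_t[OF Dpx] by simp
    show "\<And>x. x \<in> UNIV \<Longrightarrow> (\<lambda>z. px f x z) integrable_on cbox a y"
      by (rule integrable_continuous) (rule D2_cont_x[OF Dpx])
    show "continuous_on (UNIV \<times> cbox a y) (\<lambda>(x, t). pt (px f) x t)"
      by (rule D2_cont'[OF Dptpx])
  qed auto
  have eq2: "pt f s y - pt f s a = integral {a..y} (\<lambda>z. pt (px f) s z)" if "a \<le> y" for s y
  proof -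
    have d1: "((\<lambda>s. f s y - f s a) has_field_derivative (pt f s y - pt f s a)) (at s)"
      by (intro derivative_intros D2_t[OF Df])
    have d2: "((\<lambda>s. f s y - f s a) has_field_derivative integral {a..y} (\<lambda>z. pt (px f) s z)) (at s)"
    proof -
      have "((\<lambda>s. integral {a..y} (\<lambda>z. px f s z)) has_field_derivative integral {a..y} (\<lambda>z. pt (px f) s z)) (at s)"
        using lb[of y s] by (simp add: cbox_interval)
      then show ?thesis using ftc[OF that] by simp
    qed
    show ?thesis by (rule DERIV_unique[OF d1 d2])
  qed
  have cz: "continuous_on {a..b} (\<lambda>z. pt (px f) t z)" by (rule D2_cont_x[OF Dptpx])
  have "((\<lambda>y. integral {a..y} (\<lambda>z. pt (px f) t z)) has_field_derivative pt (px f) t x) (at x within {a..b})"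
    by (rule integral_has_real_derivative[OF cz]) (simp add: a_def b_def)
  moreover have "at x within {a..b} = at x"
    by (rule at_within_interior) (simp add: a_def b_def)
  ultimately have d3: "((\<lambda>y. pt f t a + integral {a..y} (\<lambda>z. pt (px f) t z)) has_field_derivative pt (px f) t x) (at x)"
    by (auto intro!: derivative_eq_intros)
  have d4: "((\<lambda>y. pt f t y) has_field_derivative pt (px f) t x) (at x)"
  proof (rule has_field_derivative_transform_within_open[OF d3, of "{a<..}"])
    show "open {a<..}" by simp
    show "x \<in> {a<..}" by (simp add: a_def)
    fix y assume "y \<in> {a<..}"
    then show "pt f t a + integral {a..y} (\<lambda>z. pt (px f) t z) = pt f t y"
      using eq2[of y t] by simp
  qed
  show "pt (px f) t x = px (pt f) t x"
    unfolding px_def[of "pt f"] using DERIV_imp_deriv[OF d4] by simp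
qed

lemma schwarz_pow:
  assumes "smooth2 f"
  shows "pt ((px ^^ n) f) = (px ^^ n) (pt f)"
proof (induction n)
  case 0 then show ?case by simp
next
  case (Suc n)
  have "pt ((px ^^ Suc n) f) = pt (px ((px ^^ n) f))" by simp
  also have "\<dots> = px (pt ((px ^^ n) f))" by (rule schwarz[OF smooth2_px_pow[OF assms]])
  also have "\<dots> = (px ^^ Suc n) (pt f)" using Suc by simp
  finally show ?case .
qed

inductive_set Kp :: "(real \<Rightarrow> real \<Rightarrow> real) set" where
  Kp_mult: "smooth2 f \<Longrightarrow> smooth2 g \<Longrightarrow> (\<lambda>t x. f t x * g t x) \<in> Kp"
| Kp_add: "h1 \<in> Kp \<Longrightarrow> h2 \<in> Kp \<Longrightarrow> (\<lambda>t x. h1 t x + h2 t x) \<in> Kp"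

lemma D2_mult: "D2 f \<Longrightarrow> D2 g \<Longrightarrow> D2 (\<lambda>t x. f t x * g t x)"
  unfolding D2_def by (auto intro: differentiable_mult)

lemma D2_add: "D2 f \<Longrightarrow> D2 g \<Longrightarrow> D2 (\<lambda>t x. f t x + g t x)"
  unfolding D2_def by (auto intro: differentiable_add)

lemma pt_mult:
  assumes "D2 f" "D2 g"
  shows "pt (\<lambda>t x. f t x * g t x) = (\<lambda>t x. pt f t x * g t x + f t x * pt g t x)"
proof (intro ext)
  fix t x
  have "((\<lambda>s. f s x * g s x) has_field_derivative (pt f t x * g t x + f t x * pt g t x)) (at t)"
    by (auto intro!: derivative_eq_intros D2_t assms)
  then show "pt (\<lambda>t x. f t x * g t x) t x = pt f t x * g t x + f t x * pt g t x"
    unfolding pt_def[of "\<lambda>t x. f t x * g t x"] by (rule DERIV_imp_deriv)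
qed

lemma px_mult:
  assumes "D2 f" "D2 g"
  shows "px (\<lambda>t x. f t x * g t x) = (\<lambda>t x. px f t x * g t x + f t x * px g t x)"
proof (intro ext)
  fix t x
  have "((\<lambda>y. f t y * g t y) has_field_derivative (px f t x * g t x + f t x * px g t x)) (at x)"
    by (auto intro!: derivative_eq_intros D2_x assms)
  then show "px (\<lambda>t x. f t x * g t x) t x = px f t x * g t x + f t x * px g t x"
    unfolding px_def[of "\<lambda>t x. f t x * g t x"] by (rule DERIV_imp_deriv)
qed

lemma pt_add:
  assumes "D2 f" "D2 g"
  shows "pt (\<lambda>t x. f t x + g t x) = (\<lambda>t x. pt f t x + pt g t x)"
proof (intro ext)
  fix t x
  have "((\<lambda>s. f s x + g s x) has_field_derivative (pt f t x + pt g t x)) (at t)"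
    by (auto intro!: derivative_eq_intros D2_t assms)
  then show "pt (\<lambda>t x. f t x + g t x) t x = pt f t x + pt g t x"
    unfolding pt_def[of "\<lambda>t x. f t x + g t x"] by (rule DERIV_imp_deriv)
qed

lemma px_add:
  assumes "D2 f" "D2 g"
  shows "px (\<lambda>t x. f t x + g t x) = (\<lambda>t x. px f t x + px g t x)"
proof (intro ext)
  fix t x
  have "((\<lambda>y. f t y + g t y) has_field_derivative (px f t x + px g t x)) (at x)"
    by (auto intro!: derivative_eq_intros D2_x assms)
  then show "px (\<lambda>t x. f t x + g t x) t x = px f t x + px g t x"
    unfolding px_def[of "\<lambda>t x. f t x + g t x"] by (rule DERIV_imp_deriv)
qed

lemma Kp_props: "h \<in> Kp \<Longrightarrow> D2 h \<and> pt h \<in> Kp \<and> px h \<in> Kp"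
proof (induction rule: Kp.induct)
  case (Kp_mult f g)
  have D: "D2 f" "D2 g" using Kp_mult by (auto intro: smooth2_D2_0)
  have "pt (\<lambda>t x. f t x * g t x) \<in> Kp"
    unfolding pt_mult[OF D] by (intro Kp.Kp_add Kp.Kp_mult smooth2_pt Kp_mult)
  moreover have "px (\<lambda>t x. f t x * g t x) \<in> Kp"
    unfolding px_mult[OF D] by (intro Kp.Kp_add Kp.Kp_mult smooth2_px Kp_mult)
  ultimately show ?case using D2_mult[OF D] by blast
next
  case (Kp_add h1 h2)
  have D: "D2 h1" "D2 h2" using Kp_add by auto
  show ?case using D2_add[OF D] Kp_add
    unfolding pt_add[OF D] px_add[OF D] by (auto intro: Kp.Kp_add)
qed

lemma smooth2_mult: "smooth2 f \<Longrightarrow> smooth2 g \<Longrightarrow> smooth2 (\<lambda>t x. f t x * g t x)"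
  by (rule smooth2_coinduct[of _ Kp]) (auto intro: Kp.Kp_mult dest: Kp_props)

lemma deriv_const': "deriv (\<lambda>s. c) t = 0"
  by (rule DERIV_imp_deriv) simp

lemma diff_snd: "snd differentiable (at (z::real\<times>real))"
  unfolding differentiable_def using has_derivative_snd[OF has_derivative_ident] by blast

lemma diff_fst: "fst differentiable (at (z::real\<times>real))"
  unfolding differentiable_def using has_derivative_fst[OF has_derivative_ident] by blast

lemma smooth2_x:
  assumes "C1 a"
  shows "smooth2 (\<lambda>t x. a x)"
proof (rule smooth2_coinduct[of _ "{h. \<exists>k. h = (\<lambda>(t::real) (x::real). (deriv ^^ k) a x)} \<union> {\<lambda>(t::real) (x::real). 0::real}"])
  show "(\<lambda>t x. a x) \<in> {h. \<exists>k. h = (\<lambda>t x. (deriv ^^ k) a x)} \<union> {\<lambda>t x. 0}"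
    by (auto intro: exI[of _ 0])
next
  fix g :: "real \<Rightarrow> real \<Rightarrow> real" assume "g \<in> {h. \<exists>k. h = (\<lambda>t x. (deriv ^^ k) a x)} \<union> {\<lambda>t x. 0}"
  then consider k where "g = (\<lambda>t x. (deriv ^^ k) a x)" | "g = (\<lambda>t x. 0)" by auto
  then show "D2 g \<and> pt g \<in> {h. \<exists>k. h = (\<lambda>t x. (deriv ^^ k) a x)} \<union> {\<lambda>t x. 0} \<and>
      px g \<in> {h. \<exists>k. h = (\<lambda>t x. (deriv ^^ k) a x)} \<union> {\<lambda>t x. 0}"
  proof cases
    case 1
    have "D2 g" unfolding D2_def 1
    proof
      fix z :: "real \<times> real"
      have "(deriv ^^ k) a differentiable (at (snd z))"
        by (rule field_differentiable_imp_differentiable[OF C1_fd[OF assms]])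
      then show "(\<lambda>p. (deriv ^^ k) a (snd p)) differentiable at z"
        by (rule differentiable_compose) (rule diff_snd)
    qed
    moreover have "pt g = (\<lambda>t x. 0)" unfolding 1 pt_def by (simp add: deriv_const')
    moreover have "px g = (\<lambda>t x. (deriv ^^ Suc k) a x)" unfolding 1 px_def by simp
    ultimately show ?thesis by blast
  next
    case 2
    have "D2 g" unfolding D2_def 2 by simp
    moreover have "pt g = (\<lambda>t x. 0)" unfolding 2 pt_def by (simp add: deriv_const')
    moreover have "px g = (\<lambda>t x. 0)" unfolding 2 px_def by (simp add: deriv_const')
    ultimately show ?thesis by blast
  qed
qed

lemma smooth2_t:
  assumes "C1 a"
  shows "smooth2 (\<lambda>t x. a t)"
proof (rule smooth2_coinduct[of _ "{h. \<exists>k. h = (\<lambda>(t::real) (x::real). (deriv ^^ k) a t)} \<union> {\<lambda>(t::real) (x::real). 0::real}"])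
  show "(\<lambda>t x. a t) \<in> {h. \<exists>k. h = (\<lambda>t x. (deriv ^^ k) a t)} \<union> {\<lambda>t x. 0}"
    by (auto intro: exI[of _ 0])
next
  fix g :: "real \<Rightarrow> real \<Rightarrow> real" assume "g \<in> {h. \<exists>k. h = (\<lambda>t x. (deriv ^^ k) a t)} \<union> {\<lambda>t x. 0}"
  then consider k where "g = (\<lambda>t x. (deriv ^^ k) a t)" | "g = (\<lambda>t x. 0)" by auto
  then show "D2 g \<and> pt g \<in> {h. \<exists>k. h = (\<lambda>t x. (deriv ^^ k) a t)} \<union> {\<lambda>t x. 0} \<and>
      px g \<in> {h. \<exists>k. h = (\<lambda>t x. (deriv ^^ k) a t)} \<union> {\<lambda>t x. 0}"
  proof cases
    case 1
    have "D2 g" unfolding D2_def 1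
    proof
      fix z :: "real \<times> real"
      have "(deriv ^^ k) a differentiable (at (fst z))"
        by (rule field_differentiable_imp_differentiable[OF C1_fd[OF assms]])
      then show "(\<lambda>p. (deriv ^^ k) a (fst p)) differentiable at z"
        by (rule differentiable_compose) (rule diff_fst)
    qed
    moreover have "px g = (\<lambda>t x. 0)" unfolding 1 px_def by (simp add: deriv_const')
    moreover have "pt g = (\<lambda>t x. (deriv ^^ Suc k) a t)" unfolding 1 pt_def by simp
    ultimately show ?thesis by blast
  next
    case 2
    have "D2 g" unfolding D2_def 2 by simp
    moreover have "pt g = (\<lambda>t x. 0)" unfolding 2 pt_def by (simp add: deriv_const')
    moreover have "px g = (\<lambda>t x. 0)" unfolding 2 px_def by (simp add: deriv_const')
    ultimately show ?thesis by blast
  qed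
qed

lemma C1_exp_poly: "C1 (\<lambda>x. exp (poly q x))"
proof -
  have ex: "\<exists>r. (deriv ^^ k) (\<lambda>x. exp (poly q x)) = (\<lambda>x. poly r x * exp (poly q x))" for k
  proof (induction k)
    case 0 show ?case by (rule exI[of _ 1]) simp
  next
    case (Suc k)
    then obtain r where r: "(deriv ^^ k) (\<lambda>x. exp (poly q x)) = (\<lambda>x. poly r x * exp (poly q x))" by blast
    have "deriv (\<lambda>x. poly r x * exp (poly q x)) = (\<lambda>x. poly (pderiv r + r * pderiv q) x * exp (poly q x))"
    proof
      fix x
      show "deriv (\<lambda>x. poly r x * exp (poly q x)) x = poly (pderiv r + r * pderiv q) x * exp (poly q x)"
        by (rule DERIV_imp_deriv) (auto intro!: derivative_eq_intros poly_DERIV simp: algebra_simps)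
    qed
    then show ?case using r by (intro exI[of _ "pderiv r + r * pderiv q"]) simp
  qed
  show ?thesis unfolding C1_def
  proof (intro allI)
    fix k x
    obtain r where r: "(deriv ^^ k) (\<lambda>x. exp (poly q x)) = (\<lambda>x. poly r x * exp (poly q x))" using ex by blast
    have "((\<lambda>x. poly r x * exp (poly q x)) has_field_derivative
       (poly (pderiv r) x * exp (poly q x) + poly r x * (exp (poly q x) * poly (pderiv q) x))) (at x)"
      by (auto intro!: derivative_eq_intros poly_DERIV)
    then show "(deriv ^^ k) (\<lambda>x. exp (poly q x)) field_differentiable at x"
      unfolding r field_differentiable_def by blast
  qed
qed

lemma C1_exp_quad: "C1 (\<lambda>x. exp (c * (x - a)^2))"
proof -
  have "(\<lambda>x. exp (c * (x - a)^2)) = (\<lambda>x. exp (poly [:c*a^2, -2*c*a, c:] x))"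
    by (simp add: fun_eq_iff power2_eq_square algebra_simps)
  then show ?thesis using C1_exp_poly[of "[:c*a^2, -2*c*a, c:]"] by (simp only:)
qed

lemma px_pow_slice: "(px ^^ m) f t x = (deriv ^^ m) (\<lambda>y. f t y) x"
proof (induction m arbitrary: x)
  case 0 then show ?case by simp
next
  case (Suc m)
  have e: "(\<lambda>y. (px ^^ m) f t y) = (deriv ^^ m) (\<lambda>y. f t y)" using Suc by (simp add: fun_eq_iff)
  have "(px ^^ Suc m) f t x = deriv (\<lambda>y. (px ^^ m) f t y) x"
    by (simp only: funpow.simps o_apply px_def[of "(px ^^ m) f"])
  also have "\<dots> = (deriv ^^ Suc m) (\<lambda>y. f t y) x" by (simp only: e funpow.simps o_apply)
  finally show ?case .
qed

lemma smooth2_slice_C1: assumes "smooth2 f" shows "C1 (\<lambda>y. f t y)"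
  unfolding C1_def
proof (intro allI)
  fix k x
  have e: "(deriv ^^ k) (\<lambda>y. f t y) = (\<lambda>y. (px ^^ k) f t y)" by (simp add: fun_eq_iff px_pow_slice)
  show "(deriv ^^ k) (\<lambda>y. f t y) field_differentiable at x"
    unfolding e by (rule D2_x_fd[OF smooth2_D2_0[OF smooth2_px_pow[OF assms]]])
qed

lemma Bo_exp:
  assumes "C1 u"
  shows "Bo lam x0 (\<lambda>x. exp (lam * ((x - x0)^2 - kk)) * u x) = (\<lambda>x. exp (lam * ((x - x0)^2 - kk)) * deriv u x)"
proof
  fix x
  have "((\<lambda>x. exp (lam * ((x - x0)^2 - kk)) * u x) has_field_derivative
      (exp (lam * ((x - x0)^2 - kk)) * (lam * (2 * (x - x0))) * u x + exp (lam * ((x - x0)^2 - kk)) * deriv u x)) (at x)"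
    by (auto intro!: derivative_eq_intros C1_DERIV0 assms simp: algebra_simps)
  then show "Bo lam x0 (\<lambda>x. exp (lam * ((x - x0)^2 - kk)) * u x) x = exp (lam * ((x - x0)^2 - kk)) * deriv u x"
    unfolding Bo_def by (simp add: DERIV_imp_deriv algebra_simps)
qed

lemma Bo_exp_pow:
  assumes "C1 u"
  shows "(Bo lam x0 ^^ k) (\<lambda>x. exp (lam * ((x - x0)^2 - kk)) * u x) = (\<lambda>x. exp (lam * ((x - x0)^2 - kk)) * (deriv ^^ k) u x)"
proof (induction k)
  case 0 then show ?case by simp
next
  case (Suc k)
  show ?case using Bo_exp[OF C1_funpow[OF assms, of k], of lam x0 kk] Suc by simp
qed

lemma int_nonneg_any:
  fixes f :: "'a::euclidean_space \<Rightarrow> real"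
  assumes "\<And>x. x \<in> S \<Longrightarrow> 0 \<le> f x"
  shows "0 \<le> integral S f"
proof (cases "f integrable_on S")
  case True then show ?thesis using assms by (rule integral_nonneg)
next
  case False then show ?thesis by (simp add: not_integrable_integral)
qed

lemma exp_sq: "exp (2 * (a::real)) = (exp a)^2"
  by (simp only: mult_2 exp_add power2_eq_square)

lemma ip_int:
  assumes "continuous_on {0..L} f" "continuous_on {0..L} g"
  shows "((\<lambda>x. f x * g x) has_integral ip L f g) {0..L}"
  unfolding ip_def by (rule cont_int) (intro continuous_intros assms)

lemma ring_id:
  fixes E U U1 P Q a b l t t0 :: real
  shows "E^2 * (a * U1 + P)^2
     - 2*a*(E^2 * (2*l*(-2*b*(t-t0))) * (2*a*b*l*(t-t0)*U^2 + U * P)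
        + E^2 * (2*a*b*l*U^2 + 2*a*b*l*(t-t0)*(2 * U * U1) + U1 * P + U * Q))
   = (a * (E * (l * (-2*b*(t-t0)) * U + 1 * U1)) + (2*a*b*l*(t-t0)) * (E * U) + E * P)^2
     - 2*a*((2*a*b*l)*((E*U)*(E*U)) + 2*(2*a*b*l*(t-t0))*((E*U)*(E * (l * (-2*b*(t-t0)) * U + 1 * U1)))
        + (E * (l * (-2*b*(t-t0)) * U + 1 * U1)) * (E * P) + (E*U) * (E * (l * (-2*b*(t-t0)) * P + 1 * Q)))"
  by (simp add: power2_eq_square algebra_simps)

lemma slice_lemma:
  fixes \<alpha> \<beta> x0 t0 lam L K t c d :: real and k :: nat
    and v w :: "real \<Rightarrow> real \<Rightarrow> real" and Rr :: "nat \<Rightarrow> real \<Rightarrow> real"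
  assumes L: "0 < L" "0 < c" "d < L"
    and sv: "smooth2 v" and supp: "\<And>s x. v s x \<noteq> 0 \<Longrightarrow> c \<le> x \<and> x \<le> d"
    and lam: "1 \<le> lam" and K0: "0 \<le> K"
    and KE: "\<And>f. nice c d f \<Longrightarrow> lam * (\<Sum>m\<le>k. real (k choose m) * lam^(2*(k-m)) * Wp L x0 (k-m) m f)
        - K * (\<Sum>m\<le>k. lam^(2*(k-m)) * Wm L m f) \<le> lam * nq L ((Bso lam x0 ^^ k) f)"
    and Rb: "\<And>m x. m \<le> k \<Longrightarrow> x \<in> {0..L} \<Longrightarrow> Rr m x \<le> 2*real ((Suc k)^2)*real (k choose m)*lam^(2*(k-m)+1)*(2*(x-x0))^(2*(k-m))
          - 4*real ((Suc k)^2)*K*lam^(2*(k-m)) - (if m = 0 then 4*\<alpha>^2*\<beta>*lam else 0)"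
    and Rc: "\<And>m. continuous_on {0..L} (Rr m)"
    and sw: "smooth2 w"
    and w_def: "w = (\<lambda>t x. exp (lam * ((x - x0)^2 - \<beta>*(t - t0)^2)) * v t x)"
  shows "0 \<le> integral {0..L} (\<lambda>x. exp (2 * lam * ((x - x0)^2 - \<beta>*(t - t0)^2)) * (\<alpha> * pt v t x + (px ^^ Suc k) v t x)^2
     - (\<Sum>m\<le>k. (2*real ((Suc k)^2)*real (k choose m)*lam^(2*(k-m)+1)*(2*(x-x0))^(2*(k-m)) + Rr m x) * ((px ^^ m) w t x)^2)
     - 2*\<alpha>*(exp (2 * lam * ((x - x0)^2 - \<beta>*(t - t0)^2)) * (2*lam*(-2*\<beta>*(t-t0))) * (2*\<alpha>*\<beta>*lam*(t-t0)*(v t x)^2 + v t x * (px ^^ Suc k) v t x)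
        + exp (2 * lam * ((x - x0)^2 - \<beta>*(t - t0)^2)) * (2*\<alpha>*\<beta>*lam*(v t x)^2 + 2*\<alpha>*\<beta>*lam*(t-t0)*(2 * v t x * pt v t x)
        + pt v t x * (px ^^ Suc k) v t x + v t x * (px ^^ Suc k) (pt v) t x)))"
proof -
  define n where "n = Suc k"
  define kk where "kk = \<beta>*(t - t0)^2"
  define e where "e x = exp (lam * ((x - x0)^2 - kk))" for x
  define \<tau> where "\<tau> = -2*\<beta>*(t - t0)"
  define V where "V = 2*\<alpha>*\<beta>*lam*(t - t0)"
  define V' where "V' = 2*\<alpha>*\<beta>*lam"
  define u where "u = (\<lambda>x. v t x)"
  define u1 where "u1 = (\<lambda>x. pt v t x)"
  have Dv: "D2 v" by (rule smooth2_D2_0[OF sv])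
  have Cu: "C1 u" unfolding u_def by (rule smooth2_slice_C1[OF sv])
  have Cu1: "C1 u1" unfolding u1_def by (rule smooth2_slice_C1[OF smooth2_pt[OF sv]])
  have Zu: "Z c d u" unfolding Z_def u_def using supp by force
  have Zu1: "Z c d u1" unfolding Z_def u1_def
  proof (intro allI impI)
    fix x assume x: "x < c \<or> d < x"
    have "(\<lambda>s. v s x) = (\<lambda>s. 0)" using supp x by force
    then show "pt v t x = 0" unfolding pt_def by (simp add: deriv_const')
  qed
  define g where "g = (\<lambda>x. e x * u x)"
  define hh where "hh = (\<lambda>x. e x * (lam * \<tau> * u x + 1 * u1 x))"
  have gw: "g = (\<lambda>x. w t x)" by (simp add: g_def e_def u_def w_def kk_def)
  have hw: "hh = (\<lambda>x. pt w t x)"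
  proof
    fix x
    have "((\<lambda>s. w s x) has_field_derivative hh x) (at t)"
      unfolding w_def hh_def e_def u_def u1_def \<tau>_def kk_def
      by (auto intro!: derivative_eq_intros D2_t[OF Dv] simp: algebra_simps power2_eq_square)
    then show "hh x = pt w t x" unfolding pt_def[of w] by (simp add: DERIV_imp_deriv)
  qed
  have ng: "nice c d g" unfolding nice_def
  proof
    show "C1 g" unfolding gw by (rule smooth2_slice_C1[OF sw])
    show "Z c d g" unfolding g_def by (rule Z_mult[OF Zu])
  qed
  have nh: "nice c d hh" unfolding nice_def
  proof
    show "C1 hh" unfolding hw by (rule smooth2_slice_C1[OF smooth2_pt[OF sw]])
    show "Z c d hh" unfolding hh_def by (rule Z_mult[OF Z_lin[OF Zu Zu1]])
  qed
  have Cg: "C1 g" and Ch: "C1 hh" using ng nh by (auto simp: nice_def)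
  define X where "X = (Bo lam x0 ^^ n) g"
  define Y where "Y = (Bso lam x0 ^^ n) g"
  define Zh where "Zh = (Bo lam x0 ^^ n) hh"
  have hX: "X x = e x * (deriv ^^ n) u x" for x
    unfolding X_def g_def e_def by (simp add: Bo_exp_pow[OF Cu])
  have hZ0: "Zh = (\<lambda>x. e x * (deriv ^^ n) (\<lambda>y. lam * \<tau> * u y + 1 * u1 y) x)"
    unfolding Zh_def hh_def e_def by (rule Bo_exp_pow[OF C1_lin[OF Cu Cu1]])
  have hZ: "Zh x = e x * (lam * \<tau> * (deriv ^^ n) u x + 1 * (deriv ^^ n) u1 x)" for x
    unfolding hZ0 funpow_deriv_lin[OF Cu Cu1] by simp
  have sl1: "(px ^^ n) v t x = (deriv ^^ n) u x" for x unfolding u_def by (rule px_pow_slice)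
  have sl2: "(px ^^ n) (pt v) t x = (deriv ^^ n) u1 x" for x unfolding u1_def by (rule px_pow_slice)
  have sl3: "(px ^^ m) w t x = (deriv ^^ m) g x" for m x unfolding gw by (rule px_pow_slice)
  have e2: "exp (2 * lam * ((x - x0)^2 - \<beta>*(t - t0)^2)) = (e x)^2" for x
    unfolding e_def kk_def using exp_sq[of "lam * ((x - x0)^2 - \<beta>*(t - t0)^2)"] by (simp add: mult.assoc)
  define coefk where "coefk m x = 2*real ((Suc k)^2)*real (k choose m)*lam^(2*(k-m)+1)*(2*(x-x0))^(2*(k-m))" for m x
  define GtE where "GtE x = 2*\<alpha>*(V'*(g x * g x) + 2*V*(g x * hh x) + hh x * X x + g x * Zh x)" for x
  have pe: "exp (2 * lam * ((x - x0)^2 - \<beta>*(t - t0)^2)) * (\<alpha> * pt v t x + (px ^^ Suc k) v t x)^2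
     - (\<Sum>m\<le>k. (2*real ((Suc k)^2)*real (k choose m)*lam^(2*(k-m)+1)*(2*(x-x0))^(2*(k-m)) + Rr m x) * ((px ^^ m) w t x)^2)
     - 2*\<alpha>*(exp (2 * lam * ((x - x0)^2 - \<beta>*(t - t0)^2)) * (2*lam*(-2*\<beta>*(t-t0))) * (2*\<alpha>*\<beta>*lam*(t-t0)*(v t x)^2 + v t x * (px ^^ Suc k) v t x)
        + exp (2 * lam * ((x - x0)^2 - \<beta>*(t - t0)^2)) * (2*\<alpha>*\<beta>*lam*(v t x)^2 + 2*\<alpha>*\<beta>*lam*(t-t0)*(2 * v t x * pt v t x)
        + pt v t x * (px ^^ Suc k) v t x + v t x * (px ^^ Suc k) (pt v) t x))
     = (\<alpha> * hh x + V * g x + X x)^2 - (\<Sum>m\<le>k. (coefk m x + Rr m x) * ((deriv ^^ m) g x)^2) - GtE x" for x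
  proof -
    have a1: "pt v t x = u1 x" "v t x = u x" by (simp_all add: u_def u1_def)
    have a2: "(px ^^ Suc k) v t x = (deriv ^^ n) u x" "(px ^^ Suc k) (pt v) t x = (deriv ^^ n) u1 x"
      using sl1 sl2 by (simp_all add: n_def)
    have s_eq: "(\<Sum>m\<le>k. (2*real ((Suc k)^2)*real (k choose m)*lam^(2*(k-m)+1)*(2*(x-x0))^(2*(k-m)) + Rr m x) * ((px ^^ m) w t x)^2)
       = (\<Sum>m\<le>k. (coefk m x + Rr m x) * ((deriv ^^ m) g x)^2)"
      by (simp add: sl3 coefk_def)
    have r_eq: "exp (2 * lam * ((x - x0)^2 - \<beta>*(t - t0)^2)) * (\<alpha> * pt v t x + (px ^^ Suc k) v t x)^2
     - 2*\<alpha>*(exp (2 * lam * ((x - x0)^2 - \<beta>*(t - t0)^2)) * (2*lam*(-2*\<beta>*(t-t0))) * (2*\<alpha>*\<beta>*lam*(t-t0)*(v t x)^2 + v t x * (px ^^ Suc k) v t x)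
        + exp (2 * lam * ((x - x0)^2 - \<beta>*(t - t0)^2)) * (2*\<alpha>*\<beta>*lam*(v t x)^2 + 2*\<alpha>*\<beta>*lam*(t-t0)*(2 * v t x * pt v t x)
        + pt v t x * (px ^^ Suc k) v t x + v t x * (px ^^ Suc k) (pt v) t x))
      = (\<alpha> * hh x + V * g x + X x)^2 - GtE x"
      unfolding e2 a1 a2 GtE_def hX hZ g_def hh_def V_def V'_def \<tau>_def by (rule ring_id)
    show ?thesis using s_eq r_eq by linarith
  qed
  have cg: "continuous_on {0..L} g" and ch: "continuous_on {0..L} hh" using Cg Ch by (auto intro: C1_cont0)
  have cX: "continuous_on {0..L} X" unfolding X_def by (rule C1_cont0[OF C1_Bo_pow[OF Cg]])
  have cY: "continuous_on {0..L} Y" unfolding Y_def by (rule C1_cont0[OF C1_Bso_pow[OF Cg]])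
  have cZ: "continuous_on {0..L} Zh" unfolding Zh_def by (rule C1_cont0[OF C1_Bo_pow[OF Ch]])
  have L0: "0 \<le> L" using L by simp
  define IA where "IA = integral {0..L} (\<lambda>x. (\<alpha> * hh x + V * g x + X x)^2)"
  define IB where "IB = integral {0..L} (\<lambda>x. (- \<alpha> * hh x + V * g x + Y x)^2)"
  have HA: "((\<lambda>x. (\<alpha> * hh x + V * g x + X x)^2) has_integral IA) {0..L}"
    unfolding IA_def by (rule cont_int) (intro continuous_intros cg ch cX)
  have HB: "((\<lambda>x. (- \<alpha> * hh x + V * g x + Y x)^2) has_integral IB) {0..L}"
    unfolding IB_def by (rule cont_int) (intro continuous_intros cg ch cY)
  have IB0: "0 \<le> IB" by (rule has_integral_nonneg[OF HB]) simp
  have Hi: "((\<lambda>x. (X x * X x) - (Y x * Y x) + 2*V*((g x * X x) - (g x * Y x))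
       + 2*\<alpha>*((hh x * X x) + (hh x * Y x) + 2*V*(g x * hh x)))
     has_integral (nq L X - nq L Y + 2*V*(ip L g X - ip L g Y) + 2*\<alpha>*(ip L hh X + ip L hh Y + 2*V*ip L g hh))) {0..L}"
    unfolding nq_def
    by (intro has_integral_add has_integral_diff has_integral_mult_right ip_int cg ch cX cY)
  have Hi2: "((\<lambda>x. (\<alpha> * hh x + V * g x + X x)^2 - (- \<alpha> * hh x + V * g x + Y x)^2) has_integral
      (nq L X - nq L Y + 2*V*(ip L g X - ip L g Y) + 2*\<alpha>*(ip L hh X + ip L hh Y + 2*V*ip L g hh))) {0..L}"
  proof -
    have "(\<lambda>x. (\<alpha> * hh x + V * g x + X x)^2 - (- \<alpha> * hh x + V * g x + Y x)^2) =
      (\<lambda>x. (X x * X x) - (Y x * Y x) + 2*V*((g x * X x) - (g x * Y x))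
       + 2*\<alpha>*((hh x * X x) + (hh x * Y x) + 2*V*(g x * hh x)))"
      by (simp add: fun_eq_iff power2_eq_square algebra_simps)
    then show ?thesis using Hi by simp
  qed
  have adjX: "ip L g X = ip L g Y"
    unfolding X_def Y_def by (subst ip_sym) (rule adj_pow[OF L0 L(2,3) ng ng])
  have i1: "IA - IB = nq L X - nq L Y + 2*\<alpha>*(ip L hh X + ip L hh Y + 2*V*ip L g hh)"
    using has_integral_unique[OF has_integral_diff[OF HA HB] Hi2] adjX by simp
  define IG where "IG = integral {0..L} GtE"
  have HG: "(GtE has_integral (2*\<alpha>*(V' * nq L g + 2*V*ip L g hh + ip L hh X + ip L g Zh))) {0..L}"
    unfolding GtE_def nq_def
    by (intro has_integral_add has_integral_mult_right ip_int cg ch cX cZ)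
  have adjZ: "ip L g Zh = ip L hh Y"
    unfolding Zh_def Y_def by (subst ip_sym) (rule adj_pow[OF L0 L(2,3) nh ng])
  have i2: "IG = 2*\<alpha>*(V' * nq L g + 2*V*ip L g hh + ip L hh X + ip L hh Y)"
    unfolding IG_def using integral_unique[OF HG] adjZ by simp
  have K2g: "nq L ((Bo lam x0 ^^ Suc k) g) \<ge> nq L ((Bso lam x0 ^^ Suc k) g) + (real (Suc k))^2 * (4 * lam) * nq L ((Bso lam x0 ^^ k) g)"
    by (rule K2[OF L0 L(2,3) ng]) (use lam in simp)
  define SW where "SW = (\<Sum>m\<le>k. real (k choose m) * lam^(2*(k-m)) * Wp L x0 (k-m) m g)"
  define SM where "SM = (\<Sum>m\<le>k. lam^(2*(k-m)) * Wm L m g)"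
  have KEg: "lam * SW - K * SM \<le> lam * nq L ((Bso lam x0 ^^ k) g)"
    unfolding SW_def SM_def by (rule KE[OF ng])
  have i3: "nq L X - nq L Y \<ge> 4 * real ((Suc k)^2) * (lam * SW - K * SM)"
  proof -
    have "4 * real ((Suc k)^2) * (lam * SW - K * SM) \<le> 4 * real ((Suc k)^2) * (lam * nq L ((Bso lam x0 ^^ k) g))"
      by (rule mult_left_mono[OF KEg]) simp
    then show ?thesis using K2g unfolding X_def Y_def n_def by (simp add: algebra_simps)
  qed
  define Im where "Im m = integral {0..L} (\<lambda>x. (coefk m x + Rr m x) * ((deriv ^^ m) g x)^2)" for m
  have HIm: "((\<lambda>x. (coefk m x + Rr m x) * ((deriv ^^ m) g x)^2) has_integral Im m) {0..L}" for m
    unfolding Im_def coefk_def by (rule cont_int) (intro continuous_intros Rc C1_cont_intros(1)[OF Cg])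
  have i4: "Im m \<le> 4 * real ((Suc k)^2) * (lam * (real (k choose m) * lam^(2*(k-m)) * Wp L x0 (k-m) m g)
      - K * (lam^(2*(k-m)) * Wm L m g)) - (if m = 0 then 4*\<alpha>^2*\<beta>*lam * nq L g else 0)" if mk: "m \<le> k" for m
  proof -
    define A where "A = 4*real ((Suc k)^2)*K*lam^(2*(k-m)) + (if m = 0 then 4*\<alpha>^2*\<beta>*lam else 0)"
    have w1: "((\<lambda>x. (2*(x - x0))^(2*(k-m)) * ((deriv ^^ m) g x)^2) has_integral Wp L x0 (k-m) m g) {0..L}"
      unfolding Wp_def by (rule cont_int) (intro continuous_intros C1_cont_intros(1)[OF Cg])
    have w2: "((\<lambda>x. ((deriv ^^ m) g x)^2) has_integral Wm L m g) {0..L}"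
      unfolding Wm_def by (rule cont_int) (intro continuous_intros C1_cont_intros(1)[OF Cg])
    have H2: "((\<lambda>x. (4*real ((Suc k)^2)*real (k choose m)*lam^(2*(k-m)+1)) * ((2*(x - x0))^(2*(k-m)) * ((deriv ^^ m) g x)^2)
        - A * ((deriv ^^ m) g x)^2) has_integral
        ((4*real ((Suc k)^2)*real (k choose m)*lam^(2*(k-m)+1)) * Wp L x0 (k-m) m g - A * Wm L m g)) {0..L}"
      by (intro has_integral_diff has_integral_mult_right w1 w2)
    have le: "Im m \<le> (4*real ((Suc k)^2)*real (k choose m)*lam^(2*(k-m)+1)) * Wp L x0 (k-m) m g - A * Wm L m g"
    proof (rule has_integral_le[OF HIm H2])
      fix x assume x: "x \<in> {0..L}"
      have "Rr m x \<le> coefk m x - A" using Rb[OF mk x] unfolding coefk_def A_def by simp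
      then have "(coefk m x + Rr m x) * ((deriv ^^ m) g x)^2 \<le> (2 * coefk m x - A) * ((deriv ^^ m) g x)^2"
        by (intro mult_right_mono) auto
      then show "(coefk m x + Rr m x) * ((deriv ^^ m) g x)^2 \<le>
        (4*real ((Suc k)^2)*real (k choose m)*lam^(2*(k-m)+1)) * ((2*(x - x0))^(2*(k-m)) * ((deriv ^^ m) g x)^2)
        - A * ((deriv ^^ m) g x)^2"
        unfolding coefk_def by (simp add: algebra_simps)
    qed
    have W0: "Wm L 0 g = nq L g" unfolding Wm_def nq_def ip_def by (simp add: power2_eq_square)
    show ?thesis using le unfolding A_def
      by (cases "m = 0") (simp_all add: W0 algebra_simps)
  qed
  have i4s: "(\<Sum>m\<le>k. Im m) \<le> 4 * real ((Suc k)^2) * (lam * SW - K * SM) - 4*\<alpha>^2*\<beta>*lam * nq L g"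
  proof -
    have "(\<Sum>m\<le>k. Im m) \<le> (\<Sum>m\<le>k. 4 * real ((Suc k)^2) * (lam * (real (k choose m) * lam^(2*(k-m)) * Wp L x0 (k-m) m g)
      - K * (lam^(2*(k-m)) * Wm L m g)) - (if m = 0 then 4*\<alpha>^2*\<beta>*lam * nq L g else 0))"
      by (rule sum_mono) (use i4 in auto)
    also have "\<dots> = (\<Sum>m\<le>k. 4 * real ((Suc k)^2) * (lam * (real (k choose m) * lam^(2*(k-m)) * Wp L x0 (k-m) m g)
      - K * (lam^(2*(k-m)) * Wm L m g))) - (\<Sum>m\<le>k. (if m = 0 then 4*\<alpha>^2*\<beta>*lam * nq L g else 0))"
      by (rule sum_subtractf)
    also have "(\<Sum>m\<le>k. (if m = 0 then 4*\<alpha>^2*\<beta>*lam * nq L g else 0)) = 4*\<alpha>^2*\<beta>*lam * nq L g"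
      by (simp add: sum.delta)
    also have "(\<Sum>m\<le>k. 4 * real ((Suc k)^2) * (lam * (real (k choose m) * lam^(2*(k-m)) * Wp L x0 (k-m) m g)
      - K * (lam^(2*(k-m)) * Wm L m g))) = 4 * real ((Suc k)^2) * (lam * SW - K * SM)"
      unfolding SW_def SM_def by (simp only: sum_distrib_left sum_subtractf right_diff_distrib)
    finally show ?thesis .
  qed
  have Htot: "((\<lambda>x. (\<alpha> * hh x + V * g x + X x)^2 - (\<Sum>m\<le>k. (coefk m x + Rr m x) * ((deriv ^^ m) g x)^2) - GtE x)
      has_integral (IA - (\<Sum>m\<le>k. Im m) - IG)) {0..L}"
  proof -
    have "(GtE has_integral IG) {0..L}" unfolding IG_def using HG by (simp add: integral_unique)
    then show ?thesis by (intro has_integral_diff HA has_integral_sum HIm) auto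
  qed
  have "integral {0..L} (\<lambda>x. exp (2 * lam * ((x - x0)^2 - \<beta>*(t - t0)^2)) * (\<alpha> * pt v t x + (px ^^ Suc k) v t x)^2
     - (\<Sum>m\<le>k. (2*real ((Suc k)^2)*real (k choose m)*lam^(2*(k-m)+1)*(2*(x-x0))^(2*(k-m)) + Rr m x) * ((px ^^ m) w t x)^2)
     - 2*\<alpha>*(exp (2 * lam * ((x - x0)^2 - \<beta>*(t - t0)^2)) * (2*lam*(-2*\<beta>*(t-t0))) * (2*\<alpha>*\<beta>*lam*(t-t0)*(v t x)^2 + v t x * (px ^^ Suc k) v t x)
        + exp (2 * lam * ((x - x0)^2 - \<beta>*(t - t0)^2)) * (2*\<alpha>*\<beta>*lam*(v t x)^2 + 2*\<alpha>*\<beta>*lam*(t-t0)*(2 * v t x * pt v t x)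
        + pt v t x * (px ^^ Suc k) v t x + v t x * (px ^^ Suc k) (pt v) t x)))
     = IA - (\<Sum>m\<le>k. Im m) - IG"
    unfolding pe by (rule integral_unique[OF Htot])
  moreover have "0 \<le> IA - (\<Sum>m\<le>k. Im m) - IG"
  proof -
    have "IA \<ge> nq L X - nq L Y + 2*\<alpha>*(ip L hh X + ip L hh Y + 2*V*ip L g hh)" using i1 IB0 by linarith
    moreover have "IG = 2*\<alpha>*V' * nq L g + 2*\<alpha>*(ip L hh X + ip L hh Y + 2*V*ip L g hh)"
      using i2 by (simp add: algebra_simps)
    moreover have "2*\<alpha>*V' * nq L g = 4*\<alpha>^2*\<beta>*lam * nq L g"
      unfolding V'_def by (simp add: power2_eq_square)
    ultimately show ?thesis using i3 i4s by linarith
  qed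
  ultimately show ?thesis by simp
qed

lemma Omega_cbox: "{0..T} \<times> {0..L} = cbox (0::real, 0::real) (T, L)"
  unfolding cbox_Pair_eq by (simp add: cbox_interval)

lemma fub1:
  fixes f :: "real \<times> real \<Rightarrow> real"
  assumes "continuous_on ({0..T} \<times> {0..L}) f"
  shows "integral ({0..T} \<times> {0..L}) f = integral {0..T} (\<lambda>t. integral {0..L} (\<lambda>x. f (t, x)))"
  using integral_prod_continuous[of 0 0 T L f] assms by (simp add: Omega_cbox cbox_interval)

lemma fub2:
  fixes f :: "real \<times> real \<Rightarrow> real"
  assumes "continuous_on ({0..T} \<times> {0..L}) f"
  shows "integral ({0..T} \<times> {0..L}) f = integral {0..L} (\<lambda>x. integral {0..T} (\<lambda>t. f (t, x)))"
proof -
  have e1: "(\<lambda>(x, y). f (x, y)) = f" by (simp add: fun_eq_iff)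
  have c1: "continuous_on (cbox (0, 0) (T, L)) (\<lambda>(x, y). (\<lambda>x y. f (x, y)) x y)"
    using assms by (simp add: Omega_cbox e1)
  have sw: "integral (cbox (0, 0) (T, L)) (\<lambda>(x, y). f (x, y)) = integral (cbox (0, 0) (L, T)) (\<lambda>(x, y). f (y, x))"
    using integral_swap_2dim[OF c1] by simp
  have c2: "continuous_on ({0..L} \<times> {0..T}) (\<lambda>(x, y). f (y, x))"
  proof -
    have "(\<lambda>(x, y). f (y, x)) = f \<circ> prod.swap" by (simp add: fun_eq_iff)
    moreover have "continuous_on ({0..L} \<times> {0..T}) (f \<circ> prod.swap)"
    proof (rule continuous_on_compose)
      show "continuous_on ({0..L} \<times> {0..T}) prod.swap" by (intro continuous_intros)
      have "prod.swap ` ({0..L} \<times> {0..T}) = {0..T} \<times> {0..L}" by auto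
      then show "continuous_on (prod.swap ` ({0..L} \<times> {0..T})) f" using assms by simp
    qed
    ultimately show ?thesis by simp
  qed
  have "integral ({0..T} \<times> {0..L}) f = integral ({0..L} \<times> {0..T}) (\<lambda>(x, y). f (y, x))"
    using sw by (simp add: Omega_cbox e1)
  also have "\<dots> = integral {0..L} (\<lambda>x. integral {0..T} (\<lambda>t. f (t, x)))"
    by (subst fub1[OF c2]) simp
  finally show ?thesis .
qed

lemma cont_int2:
  fixes f :: "real \<times> real \<Rightarrow> real"
  assumes "continuous_on ({0..T} \<times> {0..L}) f"
  shows "f integrable_on ({0..T} \<times> {0..L})"
  using assms unfolding Omega_cbox by (rule integrable_continuous)

lemma powr_split:
  fixes lam :: real and j :: nat
  assumes "0 < lam"
  shows "lam^(2*j) = lam * lam powr (2 * real j - 1)" "lam^(2*j+1) = lam^2 * lam powr (2 * real j - 1)"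
proof -
  have p1: "lam powr 1 = lam" using assms by simp
  have p2: "lam powr 2 = lam^2" using powr_realpow[OF assms, of 2] by simp
  have r1: "lam powr (real (2*j)) = lam^(2*j)" by (rule powr_realpow[OF assms])
  have r2: "lam powr (real (2*j+1)) = lam^(2*j+1)" by (rule powr_realpow[OF assms])
  have e1: "lam powr (real (2*j)) = lam powr 1 * lam powr (2 * real j - 1)"
    by (subst powr_add[symmetric]) simp
  have e2: "lam powr (real (2*j+1)) = lam powr 2 * lam powr (2 * real j - 1)"
    by (subst powr_add[symmetric]) simp
  show "lam^(2*j) = lam * lam powr (2 * real j - 1)" using e1 r1 p1 by simp
  show "lam^(2*j+1) = lam^2 * lam powr (2 * real j - 1)" using e2 r2 p2 by simp
qed

theorem theorem1p1:
  fixes T L \<alpha> x\<^sub>0 t\<^sub>0 \<beta> :: real and n :: nat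
  assumes "T > 0" and "L > 0" and "\<alpha> \<noteq> 0" and "n \<ge> 2"
    and "x\<^sub>0 > L" and "0 < t\<^sub>0" and "t\<^sub>0 < T" and "\<beta> > 0"
  defines "\<psi> \<equiv> (\<lambda>t x. (x - x\<^sub>0)^2 - \<beta> * (t - t\<^sub>0)^2)"
  shows "\<exists>C > 0. \<exists>R :: nat \<Rightarrow> real \<Rightarrow> real \<Rightarrow> real \<Rightarrow> real.
    (\<forall>m < n. \<forall>t x lam. t \<in> {0..T} \<and> x \<in> {0..L} \<and> lam \<ge> 1 \<longrightarrow>
        \<bar>R m t x lam\<bar> \<le> C * lam powr (2 * real n - 2 * real m - 3)) \<and>
    (\<forall>m < n. \<forall>lam. continuous_on ({0..T} \<times> {0..L}) (\<lambda>(t, x). R m t x lam)) \<and>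
    (\<forall>lam \<ge> 1. \<forall>v. test_fun T L v \<longrightarrow>
       (let w = (\<lambda>t x. exp (lam * \<psi> t x) * v t x) in
        (\<Sum>m<n. integral ({0..T} \<times> {0..L})
           (\<lambda>(t, x). (real (n^2) * real ((n - 1) choose m) * lam ^ (2*n - 2*m - 1)
                        * (2 * (x - x\<^sub>0)) ^ (2*n - 2*m - 2) * 2 + R m t x lam)
                      * ((px ^^ m) w t x)^2))
        \<le> integral ({0..T} \<times> {0..L})
             (\<lambda>(t, x). exp (2 * lam * \<psi> t x) * (\<alpha> * pt v t x + (px ^^ n) v t x)^2)))"
proof -
  obtain k where nk: "n = Suc k" using assms(4) by (cases n) auto
  have k1: "1 \<le> k" using assms(4) nk by simp
  obtain K where K0: "0 \<le> K" and KE: "\<forall>c d f lam. 0 < c \<longrightarrow> d < L \<longrightarrow> nice c d f \<longrightarrow> 1 \<le> lam \<longrightarrow>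
    lam * (\<Sum>m\<le>k. real (k choose m) * lam^(2*(k-m)) * Wp L x\<^sub>0 (k-m) m f) - K * (\<Sum>m\<le>k. lam^(2*(k-m)) * Wm L m f)
    \<le> lam * nq L ((Bso lam x\<^sub>0 ^^ k) f)"
    using Elem[OF assms(2), of k "x\<^sub>0"] by blast
  define \<delta> where "\<delta> = min 1 (2 * (x\<^sub>0 - L))"
  define Pb where "Pb = 2 * x\<^sub>0 + 1"
  define Gc where "Gc = 4 * real ((Suc k)^2) * K + 4 * \<alpha>^2 * \<beta>"
  define lam0 where "lam0 = Gc / (2 * real ((Suc k)^2) * \<delta>^(2*k)) + 1"
  define cf where "cf m x lam = real (n^2) * real ((n - 1) choose m) * lam ^ (2*n - 2*m - 1) * (2 * (x - x\<^sub>0)) ^ (2*n - 2*m - 2) * 2"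
    for m :: nat and x lam :: real
  define R where "R = (\<lambda>m (t::real) x lam. if lam0 \<le> lam then 0 else - (cf m x lam + Gc * lam^(2*(k-m))))"
  define C where "C = 2 * real ((Suc k)^2) * 2^k * Pb^(2*k) * lam0^2 + Gc * lam0 + 1"
  have \<delta>0: "0 < \<delta>" and \<delta>1: "\<delta> \<le> 1" using assms(5) by (auto simp: \<delta>_def)
  have Pb1: "1 \<le> Pb" using assms(2,5) by (simp add: Pb_def)
  have Gc0: "0 \<le> Gc" unfolding Gc_def using K0 assms(8) by simp
  have dk0: "0 < 2 * real ((Suc k)^2) * \<delta>^(2*k)" using \<delta>0 by simp
  have lam01: "1 \<le> lam0" unfolding lam0_def using Gc0 dk0 by simp
  have C0: "0 < C" unfolding C_def using Gc0 lam01 Pb1 by (simp add: add_nonneg_pos)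
  have cfe: "cf m x lam = 2 * real ((Suc k)^2) * real (k choose m) * lam^(2*(k-m)+1) * (2 * (x - x\<^sub>0))^(2*(k-m))"
    if "m \<le> k" for m x lam
  proof -
    have "2*n - 2*m - 1 = 2*(k-m)+1" "2*n - 2*m - 2 = 2*(k-m)" "n - 1 = k" using that nk by auto
    then show ?thesis unfolding cf_def nk by (simp add: algebra_simps)
  qed
  have pbnd: "\<delta> \<le> \<bar>2 * (x - x\<^sub>0)\<bar>" "\<bar>2 * (x - x\<^sub>0)\<bar> \<le> Pb" if "x \<in> {0..L}" for x
    using that assms(2,5) by (auto simp: \<delta>_def Pb_def)
  have plow: "\<delta>^(2*k) \<le> (2 * (x - x\<^sub>0))^(2*j)" if "x \<in> {0..L}" "j \<le> k" for x j
  proof -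
    have "\<delta>^(2*k) \<le> \<delta>^(2*j)" using \<delta>0 \<delta>1 that(2) by (intro power_decreasing) auto
    also have "\<dots> \<le> \<bar>2 * (x - x\<^sub>0)\<bar>^(2*j)" using pbnd(1)[OF that(1)] \<delta>0 by (intro power_mono) auto
    also have "\<dots> = (2 * (x - x\<^sub>0))^(2*j)" by (simp add: power_even_abs)
    finally show ?thesis .
  qed
  have pup: "(2 * (x - x\<^sub>0))^(2*j) \<le> Pb^(2*k)" if "x \<in> {0..L}" "j \<le> k" for x j
  proof -
    have "(2 * (x - x\<^sub>0))^(2*j) = \<bar>2 * (x - x\<^sub>0)\<bar>^(2*j)" by (simp add: power_even_abs)
    also have "\<dots> \<le> Pb^(2*j)" using pbnd(2)[OF that(1)] by (intro power_mono) auto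
    also have "\<dots> \<le> Pb^(2*k)" using Pb1 that(2) by (intro power_increasing) auto
    finally show ?thesis .
  qed
  have cf0: "0 \<le> cf m x lam" if "m \<le> k" "0 \<le> lam" for m x lam
    unfolding cfe[OF that(1)] using that(2) by (simp add: even_pow_nonneg)
  have cfup: "cf m x lam \<le> 2 * real ((Suc k)^2) * 2^k * Pb^(2*k) * lam^(2*(k-m)+1)"
    if "m \<le> k" "x \<in> {0..L}" "0 \<le> lam" for m x lam
  proof -
    have b: "real (k choose m) \<le> 2^k" using binomial_le_pow2[of k m]
      by (metis of_nat_le_iff of_nat_numeral of_nat_power)
    have "real (k choose m) * (2 * (x - x\<^sub>0))^(2*(k-m)) \<le> 2^k * Pb^(2*k)"
      by (rule mult_mono[OF b pup[OF that(2)]]) (auto simp: even_pow_nonneg)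
    then have "2 * real ((Suc k)^2) * lam^(2*(k-m)+1) * (real (k choose m) * (2 * (x - x\<^sub>0))^(2*(k-m)))
      \<le> 2 * real ((Suc k)^2) * lam^(2*(k-m)+1) * (2^k * Pb^(2*k))"
      by (rule mult_left_mono) (use that(3) in simp)
    then show ?thesis unfolding cfe[OF that(1)] by (simp add: algebra_simps)
  qed
  have cflow: "Gc * lam^(2*(k-m)) \<le> cf m x lam" if "m \<le> k" "x \<in> {0..L}" "lam0 \<le> lam" for m x lam
  proof -
    have l0: "0 \<le> lam" using lam01 that(3) by simp
    have "Gc \<le> 2 * real ((Suc k)^2) * \<delta>^(2*k) * lam"
    proof -
      have "Gc / (2 * real ((Suc k)^2) * \<delta>^(2*k)) \<le> lam" using that(3) unfolding lam0_def by simp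
      then show ?thesis using dk0 by (simp add: divide_le_eq mult.commute)
    qed
    also have "\<dots> \<le> 2 * real ((Suc k)^2) * real (k choose m) * (2 * (x - x\<^sub>0))^(2*(k-m)) * lam"
    proof -
      have "0 < k choose m" by (rule zero_less_binomial[OF that(1)])
      then have "1 \<le> real (k choose m)" by (simp add: Suc_le_eq)
      moreover have "\<delta>^(2*k) \<le> (2 * (x - x\<^sub>0))^(2*(k-m))" by (rule plow[OF that(2)]) simp
      ultimately have "\<delta>^(2*k) \<le> real (k choose m) * (2 * (x - x\<^sub>0))^(2*(k-m))"
        using mult_right_mono[of 1 "real (k choose m)" "(2 * (x - x\<^sub>0))^(2*(k-m))"] even_pow_nonneg[of "2 * (x - x\<^sub>0)" "k - m"]
        by simp
      then show ?thesis using l0 by (intro mult_right_mono) (auto simp: algebra_simps)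
    qed
    finally have "Gc * lam^(2*(k-m)) \<le> 2 * real ((Suc k)^2) * real (k choose m) * (2 * (x - x\<^sub>0))^(2*(k-m)) * lam * lam^(2*(k-m))"
      using l0 by (intro mult_right_mono) auto
    then show ?thesis unfolding cfe[OF that(1)] by (simp add: algebra_simps)
  qed
  have Gcb: "4 * real ((Suc k)^2) * K * lam^(2*(k-m)) + (if m = 0 then 4*\<alpha>^2*\<beta>*lam else 0) \<le> Gc * lam^(2*(k-m))"
    if "m \<le> k" "1 \<le> lam" for m lam
  proof -
    have "(if m = 0 then 4*\<alpha>^2*\<beta>*lam else 0) \<le> 4 * \<alpha>^2 * \<beta> * lam^(2*(k-m))"
    proof (cases "m = 0")
      case True
      have "lam^1 \<le> lam^(2*k)" using that(2) k1 by (intro power_increasing) auto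
      then have "lam \<le> lam^(2*k)" by simp
      then show ?thesis using True assms(8) by (simp add: mult_left_mono)
    next
      case False then show ?thesis using assms(8) that(2) by simp
    qed
    then show ?thesis unfolding Gc_def by (simp add: algebra_simps)
  qed
  have RA: "\<forall>m < n. \<forall>t x lam. t \<in> {0..T} \<and> x \<in> {0..L} \<and> lam \<ge> 1 \<longrightarrow>
        \<bar>R m t x lam\<bar> \<le> C * lam powr (2 * real n - 2 * real m - 3)"
  proof (intro allI impI)
    fix m :: nat and t x lam :: real assume m: "m < n" and h: "t \<in> {0..T} \<and> x \<in> {0..L} \<and> lam \<ge> 1"
    have mk: "m \<le> k" using m nk by simp
    have x: "x \<in> {0..L}" and l1: "1 \<le> lam" using h by auto
    have ex: "2 * real n - 2 * real m - 3 = 2 * real (k - m) - 1" using mk nk by (simp add: of_nat_diff)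
    have pp: "0 \<le> lam powr (2 * real (k - m) - 1)" by simp
    show "\<bar>R m t x lam\<bar> \<le> C * lam powr (2 * real n - 2 * real m - 3)"
    proof (cases "lam0 \<le> lam")
      case True then show ?thesis unfolding R_def ex using C0 by simp
    next
      case False
      have ps: "lam^(2*(k-m)) = lam * lam powr (2 * real (k - m) - 1)"
        "lam^(2*(k-m)+1) = lam^2 * lam powr (2 * real (k - m) - 1)" using powr_split[of lam "k - m"] l1 by auto
      have a: "\<bar>R m t x lam\<bar> = cf m x lam + Gc * lam^(2*(k-m))"
      proof -
        have "0 \<le> Gc * lam^(2*(k-m))" using Gc0 l1 by simp
        then show ?thesis using False cf0[OF mk, of lam x] l1 unfolding R_def by simp
      qed
      have b: "cf m x lam \<le> 2 * real ((Suc k)^2) * 2^k * Pb^(2*k) * lam0^2 * lam powr (2 * real (k - m) - 1)"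
      proof -
        have "cf m x lam \<le> 2 * real ((Suc k)^2) * 2^k * Pb^(2*k) * lam^(2*(k-m)+1)" using cfup[OF mk x] l1 by simp
        also have "\<dots> = 2 * real ((Suc k)^2) * 2^k * Pb^(2*k) * lam^2 * lam powr (2 * real (k - m) - 1)"
          unfolding ps by (simp add: algebra_simps)
        also have "\<dots> \<le> 2 * real ((Suc k)^2) * 2^k * Pb^(2*k) * lam0^2 * lam powr (2 * real (k - m) - 1)"
        proof -
          have "lam^2 \<le> lam0^2" using False l1 by (intro power_mono) auto
          then show ?thesis using pp Pb1 by (intro mult_right_mono mult_left_mono) auto
        qed
        finally show ?thesis .
      qed
      have c: "Gc * lam^(2*(k-m)) \<le> Gc * lam0 * lam powr (2 * real (k - m) - 1)"
      proof -
        have "Gc * lam^(2*(k-m)) = Gc * lam * lam powr (2 * real (k - m) - 1)" unfolding ps by simp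
        also have "\<dots> \<le> Gc * lam0 * lam powr (2 * real (k - m) - 1)"
          using False Gc0 pp by (intro mult_right_mono mult_left_mono) auto
        finally show ?thesis .
      qed
      have "\<bar>R m t x lam\<bar> \<le> (2 * real ((Suc k)^2) * 2^k * Pb^(2*k) * lam0^2 + Gc * lam0) * lam powr (2 * real (k - m) - 1)"
        unfolding a using b c by (simp add: algebra_simps)
      also have "\<dots> \<le> C * lam powr (2 * real (k - m) - 1)"
        unfolding C_def using pp by (intro mult_right_mono) auto
      finally show ?thesis unfolding ex .
    qed
  qed
  have RB: "\<forall>m < n. \<forall>lam. continuous_on ({0..T} \<times> {0..L}) (\<lambda>(t, x). R m t x lam)"
  proof (intro allI impI)
    fix m :: nat and lam :: real
    show "continuous_on ({0..T} \<times> {0..L}) (\<lambda>(t, x). R m t x lam)"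
    proof (cases "lam0 \<le> lam")
      case True then show ?thesis unfolding R_def by (simp add: case_prod_beta')
    next
      case False then show ?thesis unfolding R_def cf_def by (simp add: case_prod_beta') (intro continuous_intros)
    qed
  qed
  have RD: "\<forall>lam \<ge> 1. \<forall>v. test_fun T L v \<longrightarrow>
       (let w = (\<lambda>t x. exp (lam * \<psi> t x) * v t x) in
        (\<Sum>m<n. integral ({0..T} \<times> {0..L})
           (\<lambda>(t, x). (real (n^2) * real ((n - 1) choose m) * lam ^ (2*n - 2*m - 1)
                        * (2 * (x - x\<^sub>0)) ^ (2*n - 2*m - 2) * 2 + R m t x lam)
                      * ((px ^^ m) w t x)^2))
        \<le> integral ({0..T} \<times> {0..L})
             (\<lambda>(t, x). exp (2 * lam * \<psi> t x) * (\<alpha> * pt v t x + (px ^^ n) v t x)^2))"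
  proof (intro allI impI)
    fix lam :: real and v :: "real \<Rightarrow> real \<Rightarrow> real"
    assume lam1: "1 \<le> lam" and tv: "test_fun T L v"
    from tv obtain a b c d where sv: "smooth2 v" and ab: "0 < a" "b < T" and cd: "0 < c" "d < L"
      and supp: "\<And>t x. v t x \<noteq> 0 \<Longrightarrow> a \<le> t \<and> t \<le> b \<and> c \<le> x \<and> x \<le> d"
      unfolding test_fun_def by blast
    define w where "w = (\<lambda>t x. exp (lam * \<psi> t x) * v t x)"
    have wf: "w = (\<lambda>t x. exp (lam * ((x - x\<^sub>0)^2 - \<beta> * (t - t\<^sub>0)^2)) * v t x)"
      unfolding w_def \<psi>_def ..
    have wfac: "w = (\<lambda>t x. (exp (lam * (x - x\<^sub>0)^2) * exp ((- lam * \<beta>) * (t - t\<^sub>0)^2)) * v t x)"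
      unfolding wf
    proof (intro ext)
      fix t x
      have "lam * ((x - x\<^sub>0)^2 - \<beta> * (t - t\<^sub>0)^2) = lam * (x - x\<^sub>0)^2 + (- lam * \<beta>) * (t - t\<^sub>0)^2"
        by (simp add: algebra_simps)
      then show "exp (lam * ((x - x\<^sub>0)^2 - \<beta> * (t - t\<^sub>0)^2)) * v t x =
          (exp (lam * (x - x\<^sub>0)^2) * exp ((- lam * \<beta>) * (t - t\<^sub>0)^2)) * v t x"
        by (simp only: exp_add)
    qed
    have sw: "smooth2 w" unfolding wfac
      by (intro smooth2_mult smooth2_x smooth2_t C1_exp_quad sv)
    have Dv: "D2 v" by (rule smooth2_D2_0[OF sv])
    have Dpv: "D2 (pt v)" by (rule smooth2_D2_0[OF smooth2_pt[OF sv]])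
    have Dnv: "D2 ((px ^^ n) v)" by (rule smooth2_D2_0[OF smooth2_px_pow[OF sv]])
    have Dnpv: "D2 ((px ^^ n) (pt v))" by (rule smooth2_D2_0[OF smooth2_px_pow[OF smooth2_pt[OF sv]]])
    have Dmw: "D2 ((px ^^ m) w)" for m by (rule smooth2_D2_0[OF smooth2_px_pow[OF sw]])
    define RH where "RH = (\<lambda>(t, x). exp (2 * lam * \<psi> t x) * (\<alpha> * pt v t x + (px ^^ n) v t x)^2)"
    define LH where "LH m = (\<lambda>(t, x). (real (n^2) * real ((n - 1) choose m) * lam ^ (2*n - 2*m - 1)
                        * (2 * (x - x\<^sub>0)) ^ (2*n - 2*m - 2) * 2 + R m t x lam) * ((px ^^ m) w t x)^2)" for m
    define GT where "GT = (\<lambda>(t, x). 2*\<alpha>*(exp (2 * lam * \<psi> t x) * (2*lam*(-2*\<beta>*(t-t\<^sub>0))) * (2*\<alpha>*\<beta>*lam*(t-t\<^sub>0)*(v t x)^2 + v t x * (px ^^ n) v t x)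
        + exp (2 * lam * \<psi> t x) * (2*\<alpha>*\<beta>*lam*(v t x)^2 + 2*\<alpha>*\<beta>*lam*(t-t\<^sub>0)*(2 * v t x * pt v t x)
        + pt v t x * (px ^^ n) v t x + v t x * (px ^^ n) (pt v) t x)))"
    define \<Omega> where "\<Omega> = {0..T} \<times> {0..L}"
    have Rcont: "continuous_on \<Omega> (\<lambda>p. R m (fst p) (snd p) lam)" if "m < n" for m
      using RB that unfolding \<Omega>_def by (simp add: case_prod_beta')
    have cRH: "continuous_on \<Omega> RH"
      unfolding RH_def \<psi>_def case_prod_beta'
      by (intro continuous_intros D2_cont[OF Dv] D2_cont[OF Dpv] D2_cont[OF Dnv])
    have cLH: "continuous_on \<Omega> (LH m)" if "m < n" for m
      unfolding LH_def case_prod_beta'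
      by (intro continuous_intros D2_cont[OF Dmw] Rcont[OF that])
    have cGT: "continuous_on \<Omega> GT"
      unfolding GT_def \<psi>_def case_prod_beta'
      by (intro continuous_intros D2_cont[OF Dv] D2_cont[OF Dpv] D2_cont[OF Dnv] D2_cont[OF Dnpv])
    have v0: "v s x = 0" if "s \<le> 0 \<or> T \<le> s" for s x
      using supp[of s x] that ab by force
    have GT0: "integral \<Omega> GT = 0"
    proof -
      have "integral \<Omega> GT = integral {0..L} (\<lambda>x. integral {0..T} (\<lambda>t. GT (t, x)))"
        unfolding \<Omega>_def by (rule fub2) (use cGT \<Omega>_def in simp)
      also have "\<dots> = integral {0..L} (\<lambda>x. 0)"
      proof (rule integral_cong)
        fix x assume "x \<in> {0..L}"
        define Ft where "Ft t = 2*\<alpha>*(exp (2 * lam * \<psi> t x) * (2*\<alpha>*\<beta>*lam*(t-t\<^sub>0)*(v t x)^2 + v t x * (px ^^ n) v t x))" for t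
        have dn: "((\<lambda>s. (px ^^ n) v s x) has_field_derivative (px ^^ n) (pt v) s x) (at s)" for s
          using D2_t[OF Dnv, of x s] schwarz_pow[OF sv, of n] by simp
        have "((\<lambda>t. GT (t, x)) has_integral (Ft T - Ft 0)) {0..T}"
        proof (rule fundamental_theorem_of_calculus)
          show "0 \<le> T" using assms(1) by simp
          fix s assume "s \<in> {0..T}"
          have "(Ft has_field_derivative GT (s, x)) (at s)"
            unfolding Ft_def GT_def \<psi>_def
            by (auto intro!: derivative_eq_intros D2_t[OF Dv] dn simp: power2_eq_square algebra_simps)
          then show "(Ft has_vector_derivative GT (s, x)) (at s within {0..T})"
            by (simp add: has_real_derivative_iff_has_vector_derivative[symmetric] has_field_derivative_at_within)
        qed
        moreover have "Ft T = 0" "Ft 0 = 0" unfolding Ft_def using v0[of T x] v0[of 0 x] by auto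
        ultimately show "integral {0..T} (\<lambda>t. GT (t, x)) = 0" by (simp add: integral_unique)
      qed
      finally show ?thesis by simp
    qed
    have suppx: "\<And>s x. v s x \<noteq> 0 \<Longrightarrow> c \<le> x \<and> x \<le> d" using supp by blast
    have KEcd: "\<And>f. nice c d f \<Longrightarrow> lam * (\<Sum>m\<le>k. real (k choose m) * lam^(2*(k-m)) * Wp L x\<^sub>0 (k-m) m f)
        - K * (\<Sum>m\<le>k. lam^(2*(k-m)) * Wm L m f) \<le> lam * nq L ((Bso lam x\<^sub>0 ^^ k) f)"
      using KE cd lam1 by blast
    have cfl: "real (n^2) * real ((n - 1) choose m) * lam ^ (2*n - 2*m - 1) * (2 * (x - x\<^sub>0)) ^ (2*n - 2*m - 2) * 2
        = 2 * real ((Suc k)^2) * real (k choose m) * lam^(2*(k-m)+1) * (2 * (x - x\<^sub>0))^(2*(k-m))" if "m \<le> k" for m x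
      using cfe[OF that, of x lam] unfolding cf_def .
    have slice: "0 \<le> integral {0..L} (\<lambda>x. RH (t, x) - (\<Sum>m<n. LH m (t, x)) - GT (t, x))" if t: "t \<in> {0..T}" for t
    proof -
      have Rb: "R m t x lam \<le> 2*real ((Suc k)^2)*real (k choose m)*lam^(2*(k-m)+1)*(2*(x-x\<^sub>0))^(2*(k-m))
          - 4*real ((Suc k)^2)*K*lam^(2*(k-m)) - (if m = 0 then 4*\<alpha>^2*\<beta>*lam else 0)"
        if "m \<le> k" "x \<in> {0..L}" for m x
      proof -
        have G: "4 * real ((Suc k)^2) * K * lam^(2*(k-m)) + (if m = 0 then 4*\<alpha>^2*\<beta>*lam else 0) \<le> Gc * lam^(2*(k-m))"
          by (rule Gcb[OF that(1) lam1])
        have c0: "0 \<le> cf m x lam" by (rule cf0[OF that(1)]) (use lam1 in simp)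
        have "R m t x lam \<le> cf m x lam - Gc * lam^(2*(k-m))"
        proof (cases "lam0 \<le> lam")
          case True then show ?thesis using cflow[OF that True] unfolding R_def by simp
        next
          case False then show ?thesis using c0 unfolding R_def by simp
        qed
        then show ?thesis using G cfe[OF that(1), of x lam] by linarith
      qed
      have Rc: "continuous_on {0..L} (\<lambda>x. R m t x lam)" for m
      proof (cases "lam0 \<le> lam")
        case True then show ?thesis unfolding R_def by simp
      next
        case False then show ?thesis unfolding R_def cf_def by simp (intro continuous_intros)
      qed
      note S = slice_lemma[OF assms(2) cd sv suppx lam1 K0 KEcd Rb Rc sw wf]
      have eq: "RH (t, x) - (\<Sum>m<n. LH m (t, x)) - GT (t, x) =
         exp (2 * lam * ((x - x\<^sub>0)^2 - \<beta>*(t - t\<^sub>0)^2)) * (\<alpha> * pt v t x + (px ^^ Suc k) v t x)^2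
         - (\<Sum>m\<le>k. (2*real ((Suc k)^2)*real (k choose m)*lam^(2*(k-m)+1)*(2*(x-x\<^sub>0))^(2*(k-m)) + R m t x lam) * ((px ^^ m) w t x)^2)
         - 2*\<alpha>*(exp (2 * lam * ((x - x\<^sub>0)^2 - \<beta>*(t - t\<^sub>0)^2)) * (2*lam*(-2*\<beta>*(t-t\<^sub>0))) * (2*\<alpha>*\<beta>*lam*(t-t\<^sub>0)*(v t x)^2 + v t x * (px ^^ Suc k) v t x)
            + exp (2 * lam * ((x - x\<^sub>0)^2 - \<beta>*(t - t\<^sub>0)^2)) * (2*\<alpha>*\<beta>*lam*(v t x)^2 + 2*\<alpha>*\<beta>*lam*(t-t\<^sub>0)*(2 * v t x * pt v t x)
            + pt v t x * (px ^^ Suc k) v t x + v t x * (px ^^ Suc k) (pt v) t x))" for x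
      proof -
        have "(\<Sum>m<n. LH m (t, x)) = (\<Sum>m\<le>k. (2*real ((Suc k)^2)*real (k choose m)*lam^(2*(k-m)+1)*(2*(x-x\<^sub>0))^(2*(k-m)) + R m t x lam) * ((px ^^ m) w t x)^2)"
          unfolding nk lessThan_Suc_atMost[symmetric] LH_def
          by (rule sum.cong) (use cfl[unfolded nk] in auto)
        then show ?thesis unfolding RH_def GT_def \<psi>_def nk by simp
      qed
      show ?thesis unfolding eq using S[where t=t] by simp
    qed
    have cD: "continuous_on \<Omega> (\<lambda>p. RH p - (\<Sum>m<n. LH m p) - GT p)"
      by (intro continuous_intros cRH cGT cLH) auto
    have HD: "((\<lambda>p. RH p - (\<Sum>m<n. LH m p) - GT p) has_integral
        (integral \<Omega> RH - (\<Sum>m<n. integral \<Omega> (LH m)) - integral \<Omega> GT)) \<Omega>"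
    proof -
      have i1: "(RH has_integral integral \<Omega> RH) \<Omega>" using cont_int2[OF cRH[unfolded \<Omega>_def]] \<Omega>_def
        by (simp add: has_integral_integral)
      have i2: "(LH m has_integral integral \<Omega> (LH m)) \<Omega>" if "m < n" for m
        using cont_int2[OF cLH[OF that, unfolded \<Omega>_def]] \<Omega>_def by (simp add: has_integral_integral)
      have i3: "(GT has_integral integral \<Omega> GT) \<Omega>" using cont_int2[OF cGT[unfolded \<Omega>_def]] \<Omega>_def
        by (simp add: has_integral_integral)
      show ?thesis by (intro has_integral_diff i1 i3 has_integral_sum i2) auto
    qed
    have "0 \<le> integral \<Omega> (\<lambda>p. RH p - (\<Sum>m<n. LH m p) - GT p)"
    proof -
      have "integral \<Omega> (\<lambda>p. RH p - (\<Sum>m<n. LH m p) - GT p) =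
          integral {0..T} (\<lambda>t. integral {0..L} (\<lambda>x. RH (t, x) - (\<Sum>m<n. LH m (t, x)) - GT (t, x)))"
        unfolding \<Omega>_def by (rule fub1) (use cD \<Omega>_def in simp)
      also have "0 \<le> \<dots>" by (rule int_nonneg_any) (rule slice)
      finally show ?thesis .
    qed
    then have fin: "(\<Sum>m<n. integral \<Omega> (LH m)) \<le> integral \<Omega> RH"
      using integral_unique[OF HD] GT0 by simp
    show "let w = (\<lambda>t x. exp (lam * \<psi> t x) * v t x) in
        (\<Sum>m<n. integral ({0..T} \<times> {0..L})
           (\<lambda>(t, x). (real (n^2) * real ((n - 1) choose m) * lam ^ (2*n - 2*m - 1)
                        * (2 * (x - x\<^sub>0)) ^ (2*n - 2*m - 2) * 2 + R m t x lam)
                      * ((px ^^ m) w t x)^2))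
        \<le> integral ({0..T} \<times> {0..L})
             (\<lambda>(t, x). exp (2 * lam * \<psi> t x) * (\<alpha> * pt v t x + (px ^^ n) v t x)^2)"
      unfolding Let_def w_def[symmetric] using fin unfolding LH_def RH_def \<Omega>_def .
  qed
  show ?thesis using RA RB RD C0 by blast
qed

end
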